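(* Let $\mathcal{H}_1,\mathcal{H}_2$ be Hilbert spaces of finite dimensions $d_1,d_2$, let $\Lambda,\Xi\in\mathcal{O}(\mathcal{H}_1\to\mathcal{H}_2)$ be quantum channels and let $s>0$. Then $J_\Xi=\frac{J_\Lambda+s'J_\Theta}{1+s'}$ for some real $0<s'\le s$ and some channel $\Theta\in\mathcal{O}(\mathcal{H}_1\to\mathcal{H}_2)$ if and only if $S_m\!\left(\frac{1+s}{s}J_\Xi-\frac1sJ_\Lambda\right)\ge0$ for all $m=1,2,\dots,d_1d_2$.
   Context: $\mathcal{O}(\mathcal{H}_1\to\mathcal{H}_2)$ is the set of quantum channels from operators on $\mathcal{H}_1$ to operators on $\mathcal{H}_2$. The Choi operator of a linear map $\Lambda$ is $J_\Lambda=\sum_{i,j=1}^{d_1}|i\rangle\langle j|\otimes\Lambda(|i\rangle\langle j|)$. For a Hermitian operator $X$, define recursively $S_0(X)=1$ and $S_m(X)=\frac1m\sum_{l=1}^m(-1)^{l-1}\operatorname{tr}[X^l]\,S_{m-l}(X)$ for $m\ge1$. *)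

theory Defs
  imports Complex_Main "Jordan_Normal_Form.Matrix"
begin

(* Matrices are complex matrices (Jordan_Normal_Form 'complex mat'); operators on a
   d-dimensional Hilbert space are elements of carrier_mat d d (standard basis). *)

definition mtrace :: "complex mat \<Rightarrow> complex" where
  "mtrace A = (\<Sum>i<dim_row A. A $$ (i, i))"

definition psd :: "nat \<Rightarrow> complex mat \<Rightarrow> bool" where
  "psd n A \<longleftrightarrow> A \<in> carrier_mat n n \<and>
     (\<forall>v :: nat \<Rightarrow> complex.
        Im (\<Sum>i<n. \<Sum>j<n. cnj (v i) * A $$ (i, j) * v j) = 0 \<and>
        Re (\<Sum>i<n. \<Sum>j<n. cnj (v i) * A $$ (i, j) * v j) \<ge> 0)"

definition unit_mat :: "nat \<Rightarrow> nat \<Rightarrow> nat \<Rightarrow> complex mat" where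
  "unit_mat d i j = mat d d (\<lambda>(a, b). if a = i \<and> b = j then 1 else 0)"

(* (id_k \<otimes> \<Lambda>)(X), where X acts on C^k \<otimes> H_1 (block matrix of k x k blocks of size d1) *)
definition ampl :: "nat \<Rightarrow> nat \<Rightarrow> nat \<Rightarrow> (complex mat \<Rightarrow> complex mat) \<Rightarrow> complex mat \<Rightarrow> complex mat" where
  "ampl k d1 d2 \<Lambda> X = mat (k * d2) (k * d2) (\<lambda>(r, c).
      \<Lambda> (mat d1 d1 (\<lambda>(a, b). X $$ ((r div d2) * d1 + a, (c div d2) * d1 + b)))
        $$ (r mod d2, c mod d2))"

definition channel :: "nat \<Rightarrow> nat \<Rightarrow> (complex mat \<Rightarrow> complex mat) \<Rightarrow> bool" where
  "channel d1 d2 \<Lambda> \<longleftrightarrow>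
     (\<forall>A \<in> carrier_mat d1 d1. \<Lambda> A \<in> carrier_mat d2 d2) \<and>
     (\<forall>A \<in> carrier_mat d1 d1. \<forall>B \<in> carrier_mat d1 d1. \<Lambda> (A + B) = \<Lambda> A + \<Lambda> B) \<and>
     (\<forall>c. \<forall>A \<in> carrier_mat d1 d1. \<Lambda> (c \<cdot>\<^sub>m A) = c \<cdot>\<^sub>m \<Lambda> A) \<and>
     (\<forall>A \<in> carrier_mat d1 d1. mtrace (\<Lambda> A) = mtrace A) \<and>
     (\<forall>k X. psd (k * d1) X \<longrightarrow> psd (k * d2) (ampl k d1 d2 \<Lambda> X))"

(* Choi operator J = \<Sum>_{i,j} |i><j| \<otimes> \<Lambda>(|i><j|) *)
definition choi :: "nat \<Rightarrow> nat \<Rightarrow> (complex mat \<Rightarrow> complex mat) \<Rightarrow> complex mat" where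
  "choi d1 d2 \<Lambda> = mat (d1 * d2) (d1 * d2) (\<lambda>(r, c).
      \<Lambda> (unit_mat d1 (r div d2) (c div d2)) $$ (r mod d2, c mod d2))"

(* S_0(X) = 1, S_m(X) = 1/m \<Sum>_{l=1}^m (-1)^(l-1) tr[X^l] S_{m-l}(X).
   For Hermitian X all traces are real; we take real parts. *)
function S :: "nat \<Rightarrow> complex mat \<Rightarrow> real" where
  "S 0 X = 1"
| "S (Suc m) X = (1 / real (Suc m)) *
     (\<Sum>l\<in>{1..Suc m}. (-1) ^ (l - 1) * Re (mtrace (X ^\<^sub>m l)) * S (Suc m - l) X)"
  by pat_completeness auto
termination by (relation "measure fst") auto

end

theory Submission
  imports Defs "Jordan_Normal_Form.Schur_Decomposition"
begin


fun esym :: "real list \<Rightarrow> nat \<Rightarrow> real" where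
  "esym [] 0 = 1"
| "esym [] (Suc m) = 0"
| "esym (x#xs) 0 = 1"
| "esym (x#xs) (Suc m) = esym xs (Suc m) + x * esym xs m"

definition psum :: "real list \<Rightarrow> nat \<Rightarrow> real" where
  "psum xs l = (\<Sum>x\<leftarrow>xs. x ^ l)"

lemma esym_0[simp]: "esym xs 0 = 1"
  by (cases xs) auto

lemma esym_big: "m > length xs \<Longrightarrow> esym xs m = 0"
proof (induction xs arbitrary: m)
  case Nil then show ?case by (cases m) auto
next
  case (Cons x xs) then show ?case by (cases m) auto
qed

lemma psum_Cons[simp]: "psum (x#xs) l = x ^ l + psum xs l"
  by (simp add: psum_def)

lemma psum_Nil[simp]: "psum [] l = 0"
  by (simp add: psum_def)

lemma esym_Cons': "esym (x#xs) j = esym xs j + (if j = 0 then 0 else x * esym xs (j - 1))"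
  by (cases j) auto

lemma telescope:
  fixes a :: "nat \<Rightarrow> real"
  shows "(\<Sum>l\<in>{1..Suc m}. (-1)^(l-1) * a l) + (\<Sum>l\<in>{1..m}. (-1)^(l-1) * a (Suc l)) = a 1"
proof (induction m)
  case 0 then show ?case by simp
next
  case (Suc m)
  have "(\<Sum>l\<in>{1..Suc (Suc m)}. (-1::real)^(l-1) * a l) = (\<Sum>l\<in>{1..Suc m}. (-1)^(l-1) * a l) + (-1)^(Suc m) * a (Suc (Suc m))"
    by simp
  moreover have "(\<Sum>l\<in>{1..Suc m}. (-1::real)^(l-1) * a (Suc l)) = (\<Sum>l\<in>{1..m}. (-1)^(l-1) * a (Suc l)) + (-1)^m * a (Suc (Suc m))"
    by simp
  ultimately show ?case using Suc by simp
qed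

lemma newton:
  "real (Suc m) * esym xs (Suc m) = (\<Sum>l\<in>{1..Suc m}. (-1)^(l-1) * psum xs l * esym xs (Suc m - l))"
proof (induction xs arbitrary: m)
  case Nil then show ?case by simp
next
  case (Cons x xs)
  let ?e = "esym xs" and ?p = "psum xs"
  have A: "(\<Sum>l\<in>{1..Suc m}. (-1)^(l-1) * psum (x#xs) l * esym (x#xs) (Suc m - l))
     = (\<Sum>l\<in>{1..Suc m}. (-1)^(l-1) * ?p l * ?e (Suc m - l))
     + (\<Sum>l\<in>{1..Suc m}. (-1)^(l-1) * ?p l * (if Suc m - l = 0 then 0 else x * ?e (Suc m - l - 1)))
     + (\<Sum>l\<in>{1..Suc m}. (-1)^(l-1) * x^l * ?e (Suc m - l))
     + (\<Sum>l\<in>{1..Suc m}. (-1)^(l-1) * x^l * (if Suc m - l = 0 then 0 else x * ?e (Suc m - l - 1)))"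
  proof -
    have "(-1)^(l-1) * psum (x#xs) l * esym (x#xs) (Suc m - l)
       = (-1)^(l-1) * ?p l * ?e (Suc m - l)
       + (-1)^(l-1) * ?p l * (if Suc m - l = 0 then 0 else x * ?e (Suc m - l - 1))
       + (-1)^(l-1) * x^l * ?e (Suc m - l)
       + (-1)^(l-1) * x^l * (if Suc m - l = 0 then 0 else x * ?e (Suc m - l - 1))" for l
      by (simp only: psum_Cons esym_Cons') (simp only: distrib_left distrib_right mult.assoc add.assoc)
    then show ?thesis by (simp only: sum.distrib)
  qed
  have B: "(\<Sum>l\<in>{1..Suc m}. (-1)^(l-1) * ?p l * (if Suc m - l = 0 then 0 else x * ?e (Suc m - l - 1)))
     = x * (\<Sum>l\<in>{1..m}. (-1)^(l-1) * ?p l * ?e (m - l))"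
    by (simp add: sum_distrib_left algebra_simps)
  have C: "x * (\<Sum>l\<in>{1..m}. (-1)^(l-1) * ?p l * ?e (m - l)) = x * real m * ?e m"
  proof (cases m)
    case 0 then show ?thesis by simp
  next
    case (Suc k) then show ?thesis using Cons.IH[of k] by simp
  qed
  have D: "(\<Sum>l\<in>{1..Suc m}. (-1)^(l-1) * x^l * (if Suc m - l = 0 then 0 else x * ?e (Suc m - l - 1)))
     = (\<Sum>l\<in>{1..m}. (-1)^(l-1) * (x^(Suc l) * ?e (Suc m - Suc l)))"
    by (simp add: algebra_simps)
  have E: "(\<Sum>l\<in>{1..Suc m}. (-1)^(l-1) * (x^l * ?e (Suc m - l))) + (\<Sum>l\<in>{1..m}. (-1)^(l-1) * (x^(Suc l) * ?e (Suc m - Suc l))) = x * ?e m"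
    using telescope[of "\<lambda>l. x^l * ?e (Suc m - l)" m] by simp
  have F: "(\<Sum>l\<in>{1..Suc m}. (-1)^(l-1) * x^l * ?e (Suc m - l)) = (\<Sum>l\<in>{1..Suc m}. (-1)^(l-1) * (x^l * ?e (Suc m - l)))"
    by (simp add: algebra_simps)
  have G: "(\<Sum>l\<in>{1..Suc m}. (-1)^(l-1) * psum (x#xs) l * esym (x#xs) (Suc m - l))
     = real (Suc m) * ?e (Suc m) + x * real m * ?e m + x * ?e m"
    using A B C D E F Cons.IH[of m] by linarith
  show ?case unfolding G by (simp add: algebra_simps)
qed

lemma esym_nonneg: "\<forall>x\<in>set xs. x \<ge> 0 \<Longrightarrow> esym xs m \<ge> 0"
proof (induction xs arbitrary: m)
  case Nil then show ?case by (cases m) auto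
next
  case (Cons x xs) then show ?case by (cases m) auto
qed

lemma prod_expand:
  fixes t :: real
  shows "(\<Prod>x\<leftarrow>xs. t + x) = (\<Sum>m\<le>length xs. esym xs m * t ^ (length xs - m))"
proof (induction xs)
  case Nil then show ?case by simp
next
  case (Cons x xs)
  let ?L = "length xs"
  have "(\<Prod>y\<leftarrow>x#xs. t + y) = (t + x) * (\<Sum>m\<le>?L. esym xs m * t ^ (?L - m))"
    using Cons by simp
  also have "\<dots> = (\<Sum>m\<le>?L. esym xs m * t ^ (Suc ?L - m)) + (\<Sum>m\<le>?L. x * esym xs m * t ^ (?L - m))"
    by (simp add: sum_distrib_left distrib_right sum.distrib mult.assoc mult.left_commute[of t] Suc_diff_le)
  also have "(\<Sum>m\<le>?L. esym xs m * t ^ (Suc ?L - m)) = t ^ Suc ?L + (\<Sum>m<?L. esym xs (Suc m) * t ^ (?L - m))"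
    by (simp only: lessThan_Suc_atMost[symmetric] sum.lessThan_Suc_shift) simp
  also have "(\<Sum>m<?L. esym xs (Suc m) * t ^ (?L - m)) = (\<Sum>m\<le>?L. esym xs (Suc m) * t ^ (?L - m))"
    by (simp add: lessThan_Suc_atMost[symmetric] esym_big)
  also have "(\<Sum>m\<le>length (x#xs). esym (x#xs) m * t ^ (length (x#xs) - m))
      = t ^ Suc ?L + (\<Sum>m\<le>?L. esym (x#xs) (Suc m) * t ^ (?L - m))"
    by (simp only: length_Cons lessThan_Suc_atMost[symmetric] sum.lessThan_Suc_shift) simp
  ultimately show ?case by (simp add: sum.distrib algebra_simps)
qed

lemma esym_pos_imp:
  assumes "\<forall>m\<in>{1..length xs}. esym xs m \<ge> 0"
  shows "\<forall>x\<in>set xs. x \<ge> 0"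
proof (rule ccontr)
  assume "\<not> ?thesis"
  then obtain y where y: "y \<in> set xs" "y < 0" by auto
  define t where "t = - y"
  have t: "t > 0" using y t_def by simp
  have "(\<Prod>x\<leftarrow>xs. t + x) = 0"
    using y t_def by (simp add: prod_list_zero_iff) 
  moreover have "(\<Sum>m\<le>length xs. esym xs m * t ^ (length xs - m)) \<ge> t ^ length xs"
  proof -
    have "(\<Sum>m\<le>length xs. esym xs m * t ^ (length xs - m)) = t ^ length xs + (\<Sum>m\<in>{1..length xs}. esym xs m * t ^ (length xs - m))"
      by (simp add: atMost_atLeast0 sum.atLeast_Suc_atMost)
    moreover have "(\<Sum>m\<in>{1..length xs}. esym xs m * t ^ (length xs - m)) \<ge> 0"
      using assms t by (intro sum_nonneg) auto
    ultimately show ?thesis by simp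
  qed
  ultimately show False using prod_expand[of t xs] t by (metis not_le zero_less_power)
qed


lemma S_esym:
  assumes "\<forall>l\<ge>1. Re (mtrace (X ^\<^sub>m l)) = psum xs l"
  shows "S m X = esym xs m"
proof (induction m rule: less_induct)
  case (less m)
  show ?case
  proof (cases m)
    case 0 then show ?thesis by simp
  next
    case (Suc m')
    have "S (Suc m') X = (1 / real (Suc m')) *
     (\<Sum>l\<in>{1..Suc m'}. (-1) ^ (l - 1) * psum xs l * esym xs (Suc m' - l))"
      apply (simp only: S.simps)
      apply (intro arg_cong[where f="\<lambda>t. (1 / real (Suc m')) * t"] sum.cong refl)
      using assms less Suc by auto
    also have "\<dots> = esym xs (Suc m')" using newton[of m' xs] by (simp add: field_simps)
    finally show ?thesis using Suc by simp
  qed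
qed

definition mv :: "nat \<Rightarrow> complex mat \<Rightarrow> (nat \<Rightarrow> complex) \<Rightarrow> nat \<Rightarrow> complex" where
  "mv n A x = (\<lambda>i. \<Sum>j<n. A $$ (i, j) * x j)"

definition ip :: "nat \<Rightarrow> (nat \<Rightarrow> complex) \<Rightarrow> (nat \<Rightarrow> complex) \<Rightarrow> complex" where
  "ip n x y = (\<Sum>i<n. cnj (x i) * y i)"

definition herm :: "nat \<Rightarrow> complex mat \<Rightarrow> bool" where
  "herm n A \<longleftrightarrow> A \<in> carrier_mat n n \<and> (\<forall>i<n. \<forall>j<n. A $$ (i, j) = cnj (A $$ (j, i)))"

lemma mult_entry:
  assumes "A \<in> carrier_mat n n" "B \<in> carrier_mat n n" "i < n" "j < n"
  shows "(A * B) $$ (i, j) = (\<Sum>l<n. A $$ (i, l) * B $$ (l, j))"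
  using assms by (simp add: scalar_prod_def atLeast0LessThan)

lemma mv_mult:
  assumes "A \<in> carrier_mat n n" "B \<in> carrier_mat n n" "i < n"
  shows "mv n (A * B) x i = mv n A (mv n B x) i"
proof -
  have "mv n (A * B) x i = (\<Sum>j<n. (\<Sum>l<n. A $$ (i, l) * B $$ (l, j)) * x j)"
    unfolding mv_def using assms by (intro sum.cong refl) (subst mult_entry, auto)
  also have "\<dots> = (\<Sum>j<n. \<Sum>l<n. A $$ (i, l) * (B $$ (l, j) * x j))"
    by (simp add: sum_distrib_right mult.assoc)
  also have "\<dots> = (\<Sum>l<n. \<Sum>j<n. A $$ (i, l) * (B $$ (l, j) * x j))"
    by (rule sum.swap)
  also have "\<dots> = (\<Sum>l<n. A $$ (i, l) * (\<Sum>j<n. B $$ (l, j) * x j))"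
    by (simp add: sum_distrib_left)
  finally show ?thesis by (simp add: mv_def)
qed

lemma mv_one: "i < n \<Longrightarrow> mv n (1\<^sub>m n) x i = x i"
  unfolding mv_def by (simp add: sum.delta' if_distrib[where f="\<lambda>t. t * _"] cong: if_cong)

lemma mv_cong: "(\<And>j. j < n \<Longrightarrow> x j = y j) \<Longrightarrow> mv n A x i = mv n A y i"
  unfolding mv_def by (intro sum.cong) auto

lemma ip_cong: "(\<And>j. j < n \<Longrightarrow> x j = x' j) \<Longrightarrow> (\<And>j. j < n \<Longrightarrow> y j = y' j) \<Longrightarrow> ip n x y = ip n x' y'"
  unfolding ip_def by (intro sum.cong) auto

lemma herm_adj:
  assumes "herm n A"
  shows "ip n (mv n A x) y = ip n x (mv n A y)"
proof -
  have "ip n (mv n A x) y = (\<Sum>i<n. \<Sum>j<n. cnj (A $$ (i, j)) * cnj (x j) * y i)"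
    by (simp add: ip_def mv_def sum_distrib_right)
  also have "\<dots> = (\<Sum>i<n. \<Sum>j<n. A $$ (j, i) * cnj (x j) * y i)"
    using assms unfolding herm_def by (intro sum.cong refl) (metis complex_cnj_cnj lessThan_iff)
  also have "\<dots> = (\<Sum>j<n. \<Sum>i<n. cnj (x j) * (A $$ (j, i) * y i))"
    by (subst sum.swap) (simp add: algebra_simps)
  also have "\<dots> = ip n x (mv n A y)"
    by (simp add: ip_def mv_def sum_distrib_left)
  finally show ?thesis .
qed

lemma cnj_mult_self: "cnj z * z = complex_of_real ((cmod z)^2)"
  by (metis complex_norm_square mult.commute of_real_power)

lemma ip_self: "ip n x x = of_real (\<Sum>i<n. (cmod (x i))^2)"
  unfolding ip_def by (simp only: cnj_mult_self of_real_sum)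

lemma ip_self_zero: "ip n x x = 0 \<Longrightarrow> i < n \<Longrightarrow> x i = 0"
proof -
  assume "ip n x x = 0" "i < n"
  then have "complex_of_real (\<Sum>i<n. (cmod (x i))^2) = 0" by (simp only: ip_self)
  then have "(\<Sum>i<n. (cmod (x i))^2) = 0" by (simp only: of_real_eq_0_iff)
  then have "\<forall>i\<in>{..<n}. (cmod (x i))^2 = 0" by (subst (asm) sum_nonneg_eq_0_iff) auto
  then show "x i = 0" using \<open>i < n\<close> by simp
qed

lemma ip_cnj: "ip n y x = cnj (ip n x y)"
  unfolding ip_def by (simp add: mult.commute)

lemma herm_real_quad:
  assumes "herm n A"
  shows "Im (ip n x (mv n A x)) = 0"
proof -
  have "ip n x (mv n A x) = cnj (ip n x (mv n A x))"
    using herm_adj[OF assms, of x x] ip_cnj[of n x "mv n A x"] by simp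
  then show ?thesis by (metis Reals_cnj_iff complex_is_Real_iff)
qed

definition sadj :: "nat \<Rightarrow> complex mat \<Rightarrow> bool" where
  "sadj n C \<longleftrightarrow> (\<forall>x y. ip n (mv n C x) y = ip n x (mv n C y))"

lemma herm_sadj: "herm n A \<Longrightarrow> sadj n A"
  unfolding sadj_def by (simp add: herm_adj)

lemma nilp_herm:
  assumes "sadj n C" and "\<forall>x. \<forall>i<n. (mv n C ^^ Suc m) x i = 0" and "m \<ge> 1"
  shows "\<forall>x. \<forall>i<n. (mv n C ^^ m) x i = 0"
proof (intro allI impI)
  fix x i assume i: "i < n"
  obtain m' where m': "m = Suc m'" using assms(3) by (cases m) auto
  define y where "y = (mv n C ^^ m') x"
  define z where "z = (mv n C ^^ m) x"
  have z: "z = mv n C y" unfolding z_def y_def m' by simp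
  have Cz: "mv n C z j = 0" if "j < n" for j
  proof -
    have "mv n C z = (mv n C ^^ Suc m) x" unfolding z_def by simp
    then show ?thesis using assms(2) that by simp
  qed
  have "ip n z z = ip n (mv n C y) z" using z by simp
  also have "\<dots> = ip n y (mv n C z)" using assms(1) unfolding sadj_def by (rule spec2)
  also have "\<dots> = ip n y (\<lambda>_. 0)"
    by (rule ip_cong) (simp_all add: Cz)
  also have "\<dots> = 0" by (simp add: ip_def)
  finally have "ip n z z = 0" .
  then show "(mv n C ^^ m) x i = 0" using ip_self_zero[of n z i] i unfolding z_def by blast
qed

lemma nilp_herm_zero:
  assumes "sadj n C" and "\<forall>x. \<forall>i<n. (mv n C ^^ m) x i = 0" and "m \<ge> 1"
  shows "\<forall>x. \<forall>i<n. mv n C x i = 0"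
  using assms(2,3)
proof (induction m)
  case 0 then show ?case by simp
next
  case (Suc m)
  show ?case
  proof (cases m)
    case 0 then show ?thesis using Suc.prems(1) by simp
  next
    case (Suc m')
    then have "m \<ge> 1" by simp
    from nilp_herm[OF assms(1) Suc.prems(1) this] have "\<forall>x. \<forall>i<n. (mv n C ^^ m) x i = 0" .
    then show ?thesis using Suc.IH \<open>m \<ge> 1\<close> by blast
  qed
qed

lemma mv_pow:
  assumes "C \<in> carrier_mat n n" 
  shows "i < n \<Longrightarrow> mv n (C ^\<^sub>m k) x i = (mv n C ^^ k) x i"
proof (induction k arbitrary: x i)
  case 0 then show ?case using assms by (simp add: mv_one)
next
  case (Suc k)
  have "mv n (C ^\<^sub>m Suc k) x i = mv n (C ^\<^sub>m k) (mv n C x) i"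
    using assms Suc by (simp add: mv_mult)
  also have "\<dots> = (mv n C ^^ k) (mv n C x) i" using Suc by simp
  finally show ?case by (simp add: funpow_Suc_right del: funpow.simps)
qed

lemma strict_upper_pow:
  assumes B: "B \<in> carrier_mat n n" and su: "\<forall>i<n. \<forall>j<n. j \<le> i \<longrightarrow> B $$ (i, j) = 0"
  shows "\<forall>i<n. \<forall>j<n. j < i + m \<longrightarrow> (B ^\<^sub>m m) $$ (i, j) = 0"
proof (induction m)
  case 0 then show ?case using B by auto
next
  case (Suc m)
  show ?case
  proof (intro allI impI)
    fix i j assume ij: "i < n" "j < n" "j < i + Suc m"
    have Bm: "B ^\<^sub>m m \<in> carrier_mat n n" using B by (intro carrier_matI) auto
    have "(B ^\<^sub>m Suc m) $$ (i, j) = (B ^\<^sub>m m * B) $$ (i, j)" by simp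
    also have "\<dots> = (\<Sum>l<n. (B ^\<^sub>m m) $$ (i, l) * B $$ (l, j))"
      using B ij Bm by (intro mult_entry) auto
    also have "\<dots> = 0"
    proof (intro sum.neutral ballI)
      fix l assume l: "l \<in> {..<n}"
      show "(B ^\<^sub>m m) $$ (i, l) * B $$ (l, j) = 0"
      proof (cases "l < i + m")
        case True then show ?thesis using Suc ij l by auto
      next
        case False then show ?thesis using su ij l by auto
      qed
    qed
    finally show "(B ^\<^sub>m Suc m) $$ (i, j) = 0" .
  qed
qed


lemma poly_root_prod: "\<mu> \<in> set as \<Longrightarrow> poly (\<Prod>a\<leftarrow>as. [:- a, 1:]) \<mu> = (0::complex)"
  by (induction as) auto

lemma sum_delta_mult: "(i::nat) < n \<Longrightarrow> (\<Sum>j<n. (if i = j then 1 else 0) * (x j::complex)) = x i"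
proof -
  assume i: "i < n"
  have "(\<Sum>j<n. (if i = j then 1 else 0) * (x j::complex)) = (\<Sum>j<n. if i = j then x j else 0)"
    by (intro sum.cong) auto
  also have "\<dots> = x i" by (subst sum.delta') (simp_all add: i)
  finally show ?thesis .
qed

lemma finish_step:
  assumes "i0 < n" "x i0 \<noteq> 0" "\<forall>p<k. ip n (u p) x = 0" "\<forall>i<n. mv n A x i = of_real \<mu> * x i"
  shows "\<exists>w \<mu>. ip n w w = 1 \<and> (\<forall>p<k. ip n (u p) w = 0) \<and> (\<forall>i<n. mv n A w i = of_real \<mu> * w i)"
proof -
  define r where "r = (\<Sum>i<n. (cmod (x i))^2)"
  have "(cmod (x i0))^2 > 0" using assms(2) by simp
  moreover have "(cmod (x i0))^2 \<le> r" unfolding r_def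
    using assms(1) by (intro member_le_sum) auto
  ultimately have r: "r > 0" by linarith
  define c where "c = complex_of_real (sqrt r)"
  have c0: "c \<noteq> 0" using r c_def by simp
  have cc: "cnj c * c = of_real r" using r c_def by (simp flip: of_real_mult)
  define w where "w = (\<lambda>i. x i / c)"
  have ww: "ip n w w = ip n x x / (cnj c * c)"
    unfolding ip_def w_def by (simp add: sum_divide_distrib)
  have "ip n x x = of_real r" by (simp only: ip_self r_def)
  then have "ip n x x / (cnj c * c) = 1" using cc r by simp
  then have 1: "ip n w w = 1" using ww by simp
  have 2: "\<forall>p<k. ip n (u p) w = 0"
    using assms(3) unfolding ip_def w_def by (simp add: sum_divide_distrib[symmetric])
  have 3: "\<forall>i<n. mv n A w i = of_real \<mu> * w i"
    using assms(4) unfolding mv_def w_def by (simp add: sum_divide_distrib[symmetric])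
  show ?thesis using 1 2 3 by blast
qed

lemma eigen_step:
  assumes hA: "herm n A" and kn: "k < n"
    and orth: "\<forall>p<k. \<forall>q<k. ip n (u p) (u q) = (if p = q then 1 else 0)"
    and eig: "\<forall>p<k. \<forall>i<n. mv n A (u p) i = of_real (lam p) * u p i"
  shows "\<exists>w \<mu>. ip n w w = 1 \<and> (\<forall>p<k. ip n (u p) w = 0) \<and> (\<forall>i<n. mv n A w i = of_real \<mu> * w i)"
proof -
  have Ac: "A \<in> carrier_mat n n" using hA herm_def by auto
  define q where "q i j = (if i = j then 1 else 0) - (\<Sum>p<k. u p i * cnj (u p j))" for i j
  define Q where "Q = mat n n (\<lambda>(i,j). q i j)"
  have Qc: "Q \<in> carrier_mat n n" unfolding Q_def by simp
  have hQ: "herm n Q" unfolding herm_def Q_def q_def by (simp add: mult.commute)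
  have Qmv: "mv n Q x i = x i - (\<Sum>p<k. u p i * ip n (u p) x)" if "i < n" for x i
  proof -
    have "mv n Q x i = (\<Sum>j<n. (if i = j then 1 else 0) * x j - (\<Sum>p<k. u p i * cnj (u p j)) * x j)"
      unfolding mv_def Q_def q_def using that by (intro sum.cong) (auto simp: algebra_simps)
    also have "\<dots> = x i - (\<Sum>p<k. u p i * ip n (u p) x)"
      using that by (simp add: sum_subtractf sum_delta_mult ip_def sum_distrib_left sum_distrib_right mult.assoc
          sum.swap[of _ "{..<n}" "{..<k}"])
    finally show ?thesis .
  qed
  have Qorth: "ip n (u r) (mv n Q x) = 0" if "r < k" for x r
  proof -
    have "ip n (u r) (mv n Q x) = ip n (u r) (\<lambda>i. x i - (\<Sum>p<k. u p i * ip n (u p) x))"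
      by (intro ip_cong) (auto simp: Qmv)
    also have "\<dots> = ip n (u r) x - (\<Sum>p<k. ip n (u r) (u p) * ip n (u p) x)"
      by (simp add: ip_def algebra_simps sum_subtractf sum_distrib_left sum_distrib_right
          sum.swap[of _ "{..<n}" "{..<k}"])
    also have "\<dots> = 0" using orth that by (simp add: if_distrib[where f="\<lambda>t. t * _"] sum.delta cong: if_cong)
    finally show ?thesis .
  qed
  have Qfix: "mv n Q x i = x i" if "\<forall>p<k. ip n (u p) x = 0" "i < n" for x i
    using that by (simp add: Qmv)
  have Apres: "ip n (u p) (mv n A x) = 0" if "p < k" "ip n (u p) x = 0" for x p
  proof -
    have "ip n (u p) (mv n A x) = ip n (mv n A (u p)) x" using herm_adj[OF hA] by simp
    also have "\<dots> = ip n (\<lambda>i. of_real (lam p) * u p i) x"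
      using eig that by (intro ip_cong) auto
    also have "\<dots> = of_real (lam p) * ip n (u p) x"
      by (simp add: ip_def sum_distrib_left mult.assoc)
    finally show ?thesis using that by simp
  qed
  define C where "C = Q * A * Q"
  have Cc: "C \<in> carrier_mat n n" unfolding C_def using Qc Ac by auto
  have Cmv: "mv n C x i = mv n Q (mv n A (mv n Q x)) i" if "i < n" for x i
  proof -
    have "mv n C x i = mv n (Q * A) (mv n Q x) i" unfolding C_def
      using Qc Ac that by (intro mv_mult) auto
    also have "\<dots> = mv n Q (mv n A (mv n Q x)) i" using Qc Ac that by (intro mv_mult) auto
    finally show ?thesis .
  qed
  have sC: "sadj n C" unfolding sadj_def
  proof (intro allI)
    fix x y
    have "ip n (mv n C x) y = ip n (mv n Q (mv n A (mv n Q x))) y" by (intro ip_cong) (auto simp: Cmv)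
    also have "\<dots> = ip n (mv n A (mv n Q x)) (mv n Q y)" by (rule herm_adj[OF hQ])
    also have "\<dots> = ip n (mv n Q x) (mv n A (mv n Q y))" by (rule herm_adj[OF hA])
    also have "\<dots> = ip n x (mv n Q (mv n A (mv n Q y)))" by (rule herm_adj[OF hQ])
    also have "\<dots> = ip n x (mv n C y)" by (intro ip_cong) (auto simp: Cmv)
    finally show "ip n (mv n C x) y = ip n x (mv n C y)" .
  qed
  have "\<exists>i<n. \<exists>j<n. q i j \<noteq> 0"
  proof (rule ccontr)
    assume "\<not> ?thesis"
    then have z: "\<forall>i<n. (\<Sum>p<k. u p i * cnj (u p i)) = 1" unfolding q_def by force
    have "(of_nat n :: complex) = (\<Sum>i<n. (\<Sum>p<k. u p i * cnj (u p i)))" using z by simp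
    also have "\<dots> = (\<Sum>p<k. ip n (u p) (u p))"
      by (simp add: ip_def sum.swap[of _ "{..<n}" "{..<k}"] mult.commute)
    also have "\<dots> = of_nat k" using orth by simp
    finally show False using kn by simp
  qed
  then obtain i0 j0 where ij0: "i0 < n" "j0 < n" "q i0 j0 \<noteq> 0" by blast
  define x0 where "x0 = (\<lambda>i. q i j0)"
  have x0Q: "x0 i = mv n Q (\<lambda>l. if l = j0 then 1 else 0) i" if "i < n" for i
    unfolding x0_def mv_def Q_def using that ij0 by (simp add: if_distrib[where f="\<lambda>t. _ * t"] cong: if_cong)
  have x0V: "\<forall>p<k. ip n (u p) x0 = 0"
  proof (intro allI impI)
    fix p assume "p < k"
    have "ip n (u p) x0 = ip n (u p) (mv n Q (\<lambda>l. if l = j0 then 1 else 0))" by (intro ip_cong) (auto simp: x0Q)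
    then show "ip n (u p) x0 = 0" using Qorth \<open>p < k\<close> by simp
  qed
  obtain as where cp: "char_poly C = (\<Prod>a\<leftarrow>as. [:- a, 1:])" and las: "length as = n"
    using char_poly_factorized[OF Cc] by blast
  show ?thesis
  proof (cases "\<exists>\<mu>\<in>set as. \<mu> \<noteq> 0")
    case True
    then obtain \<mu> where mu: "\<mu> \<in> set as" "\<mu> \<noteq> 0" by blast
    have "eigenvalue C \<mu>" using eigenvalue_root_char_poly[OF Cc] cp poly_root_prod[OF mu(1)] by simp
    then obtain v where ev: "eigenvector C v \<mu>" unfolding eigenvalue_def by blast
    then have vc: "v \<in> carrier_vec n" and v0: "v \<noteq> 0\<^sub>v n" and Cv: "C *\<^sub>v v = \<mu> \<cdot>\<^sub>v v"
      unfolding eigenvector_def using Cc by auto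
    define x where "x = (\<lambda>i. v $ i)"
    obtain i1 where i1: "i1 < n" "x i1 \<noteq> 0" using v0 vc unfolding x_def by (auto simp: vec_eq_iff)
    have Cx: "mv n C x i = \<mu> * x i" if "i < n" for i
    proof -
      have "(C *\<^sub>v v) $ i = \<mu> * v $ i" using Cv that vc by simp
      then show ?thesis using that vc Cc unfolding mv_def x_def by (simp add: scalar_prod_def atLeast0LessThan)
    qed
    have xV: "\<forall>p<k. ip n (u p) x = 0"
    proof (intro allI impI)
      fix p assume p: "p < k"
      have "ip n (u p) x = ip n (u p) (\<lambda>i. (1 / \<mu>) * mv n Q (mv n A (mv n Q x)) i)"
        using Cx Cmv mu by (intro ip_cong) (auto simp: field_simps)
      also have "\<dots> = (1 / \<mu>) * ip n (u p) (mv n Q (mv n A (mv n Q x)))"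
        by (simp add: ip_def sum_distrib_left algebra_simps)
      finally show "ip n (u p) x = 0" using Qorth p by simp
    qed
    have AxV: "\<forall>p<k. ip n (u p) (mv n A x) = 0" using Apres xV by blast
    have Ax: "mv n A x i = \<mu> * x i" if "i < n" for i
    proof -
      have "mv n C x i = mv n Q (mv n A (mv n Q x)) i" using Cmv that by simp
      also have "\<dots> = mv n Q (mv n A x) i" using Qfix xV by (intro mv_cong) (auto intro!: mv_cong)
      also have "\<dots> = mv n A x i" using Qfix AxV that by simp
      finally show ?thesis using Cx that by simp
    qed
    have "ip n x (mv n A x) = \<mu> * ip n x x"
    proof -
      have "ip n x (mv n A x) = ip n x (\<lambda>i. \<mu> * x i)" using Ax by (intro ip_cong) auto
      then show ?thesis by (simp add: ip_def sum_distrib_left algebra_simps)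
    qed
    moreover have "Im (ip n x (mv n A x)) = 0" by (rule herm_real_quad[OF hA])
    moreover obtain r where r: "ip n x x = of_real r" "r \<noteq> 0"
    proof -
      have "(cmod (x i1))^2 > 0" using i1 by simp
      moreover have "(cmod (x i1))^2 \<le> (\<Sum>i<n. (cmod (x i))^2)"
        using i1 by (intro member_le_sum) auto
      ultimately have "(\<Sum>i<n. (cmod (x i))^2) \<noteq> 0" by linarith
      then show ?thesis by (intro that[OF ip_self])
    qed
    ultimately have "Im \<mu> = 0" by simp
    then have "\<mu> = of_real (Re \<mu>)" by (simp add: complex_eq_iff)
    then show ?thesis using finish_step[OF i1 xV, of A "Re \<mu>"] Ax by simp
  next
    case False
    then have all0: "\<forall>a\<in>set as. a = 0" by blast
    obtain B P P' where sd: "schur_decomposition C as = (B, P, P')" by (cases "schur_decomposition C as") auto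
    from schur_decomposition[OF Cc cp sd] have sw: "similar_mat_wit C B P P'" and ut: "upper_triangular B"
      and dg: "diag_mat B = as" by auto
    note sw2 = similar_mat_witD2[OF Cc sw]
    have Bc: "B \<in> carrier_mat n n" and Pc: "P \<in> carrier_mat n n" and P'c: "P' \<in> carrier_mat n n" using sw2 by auto
    have su: "\<forall>i<n. \<forall>j<n. j \<le> i \<longrightarrow> B $$ (i, j) = 0"
    proof (intro allI impI)
      fix i j assume "i < n" "j < n" "j \<le> i"
      show "B $$ (i, j) = 0"
      proof (cases "j = i")
        case True
        have "B $$ (i, i) = as ! i" using dg Bc \<open>i < n\<close> unfolding diag_mat_def by auto
        then show ?thesis using all0 True las \<open>i < n\<close> by simp
      next
        case False then show ?thesis using ut Bc \<open>i < n\<close> \<open>j \<le> i\<close> by auto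
      qed
    qed
    have Bn: "(B ^\<^sub>m n) $$ (i, j) = 0" if "i < n" "j < n" for i j
      using strict_upper_pow[OF Bc su, of n] that by auto
    have Cn: "mv n (C ^\<^sub>m n) x i = 0" if "i < n" for x i
    proof -
      have "C ^\<^sub>m n = P * B ^\<^sub>m n * P'" by (rule similar_mat_wit_pow_id[OF sw])
      have Bnc: "B ^\<^sub>m n \<in> carrier_mat n n" using Bc by (intro carrier_matI) auto
      have PBc: "P * B ^\<^sub>m n \<in> carrier_mat n n" using Pc Bnc by auto
      from \<open>C ^\<^sub>m n = P * B ^\<^sub>m n * P'\<close>
      have "mv n (C ^\<^sub>m n) x i = mv n (P * B ^\<^sub>m n * P') x i" by simp
      also have "\<dots> = mv n (P * B ^\<^sub>m n) (mv n P' x) i" by (rule mv_mult[OF PBc P'c that])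
      also have "\<dots> = mv n P (mv n (B ^\<^sub>m n) (mv n P' x)) i" by (rule mv_mult[OF Pc Bnc that])
      finally have "mv n (C ^\<^sub>m n) x i = mv n P (mv n (B ^\<^sub>m n) (mv n P' x)) i" .
      also have "\<dots> = mv n P (\<lambda>_. 0) i" by (intro mv_cong) (simp add: mv_def Bn)
      finally show ?thesis by (simp add: mv_def)
    qed
    have "\<forall>x. \<forall>i<n. (mv n C ^^ n) x i = 0" using Cn mv_pow[OF Cc] by simp
    then have C0: "\<forall>x. \<forall>i<n. mv n C x i = 0" using nilp_herm_zero[OF sC] kn by simp
    have Ax0: "mv n A x0 i = of_real 0 * x0 i" if "i < n" for i
    proof -
      have "mv n A x0 i = mv n Q (mv n A x0) i" using Qfix Apres x0V that by simp
      also have "\<dots> = mv n Q (mv n A (mv n Q x0)) i" using Qfix x0V by (intro mv_cong) (auto intro!: mv_cong)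
      also have "\<dots> = mv n C x0 i" using Cmv that by simp
      finally show ?thesis using C0 that by simp
    qed
    show ?thesis using finish_step[OF ij0(1), of x0 k u A 0] ij0 x0V Ax0 unfolding x0_def by simp
  qed
qed


lemma spectral_k:
  assumes hA: "herm n A" and "k \<le> n"
  shows "\<exists>u lam. (\<forall>p<k. \<forall>q<k. ip n (u p) (u q) = (if p = q then 1 else 0)) \<and>
      (\<forall>p<k. \<forall>i<n. mv n A (u p) i = of_real (lam p) * u p i)"
  using assms(2)
proof (induction k)
  case 0 then show ?case by simp
next
  case (Suc k)
  then obtain u lam where orth: "\<forall>p<k. \<forall>q<k. ip n (u p) (u q) = (if p = q then 1 else 0)"
    and eig: "\<forall>p<k. \<forall>i<n. mv n A (u p) i = of_real (lam p) * u p i" by auto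
  obtain w \<mu> where w: "ip n w w = 1" "\<forall>p<k. ip n (u p) w = 0" "\<forall>i<n. mv n A w i = of_real \<mu> * w i"
    using eigen_step[OF hA _ orth eig] Suc.prems by auto
  define u' where "u' = u(k := w)"
  define lam' where "lam' = lam(k := \<mu>)"
  have "\<forall>p<Suc k. \<forall>q<Suc k. ip n (u' p) (u' q) = (if p = q then 1 else 0)"
  proof (intro allI impI)
    fix p q assume p: "p < Suc k" and q: "q < Suc k"
    show "ip n (u' p) (u' q) = (if p = q then 1 else 0)"
    proof (cases "p = k")
      case True
      show ?thesis
      proof (cases "q = k")
        case True then show ?thesis using \<open>p = k\<close> w u'_def by simp
      next
        case False
        then have "q < k" using q by simp
        then have "ip n w (u q) = 0" using w(2) ip_cnj[of n w "u q"] by simp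
        then show ?thesis using \<open>p = k\<close> False u'_def by simp
      qed
    next
      case False
      then have "p < k" using p by simp
      show ?thesis
      proof (cases "q = k")
        case True then show ?thesis using \<open>p < k\<close> w u'_def by simp
      next
        case False
        then have "q < k" using q by simp
        then show ?thesis using \<open>p < k\<close> orth u'_def by simp
      qed
    qed
  qed
  moreover have "\<forall>p<Suc k. \<forall>i<n. mv n A (u' p) i = of_real (lam' p) * u' p i"
    using eig w(3) unfolding u'_def lam'_def by (auto simp: less_Suc_eq)
  ultimately show ?case by blast
qed

lemma completeness:
  assumes orth: "\<forall>p<n. \<forall>q<n. ip n (u p) (u q) = (if p = q then 1 else 0)"
  shows "\<forall>i<n. \<forall>j<n. (\<Sum>p<n. u p i * cnj (u p j)) = (if i = j then 1 else 0)"
proof -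
  define U where "U = mat n n (\<lambda>(i, p). u p i)"
  define V where "V = mat n n (\<lambda>(p, i). cnj (u p i))"
  have Uc: "U \<in> carrier_mat n n" and Vc: "V \<in> carrier_mat n n" unfolding U_def V_def by auto
  have "V * U = 1\<^sub>m n"
  proof (rule eq_matI)
    fix p q assume "p < dim_row (1\<^sub>m n :: complex mat)" "q < dim_col (1\<^sub>m n :: complex mat)"
    then have pq: "p < n" "q < n" by auto
    have "(V * U) $$ (p, q) = (\<Sum>i<n. V $$ (p, i) * U $$ (i, q))" using mult_entry[OF Vc Uc pq] .
    also have "\<dots> = ip n (u p) (u q)" unfolding ip_def V_def U_def using pq by (intro sum.cong) auto
    finally show "(V * U) $$ (p, q) = 1\<^sub>m n $$ (p, q)" using orth pq by simp
  qed (use Uc Vc in auto)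
  then have UV: "U * V = 1\<^sub>m n" using mat_mult_left_right_inverse[OF Vc Uc] by simp
  show ?thesis
  proof (intro allI impI)
    fix i j assume ij: "i < n" "j < n"
    have "(\<Sum>p<n. u p i * cnj (u p j)) = (\<Sum>p<n. U $$ (i, p) * V $$ (p, j))"
      unfolding U_def V_def using ij by (intro sum.cong) auto
    also have "\<dots> = (U * V) $$ (i, j)" using mult_entry[OF Uc Vc ij] by simp
    finally show "(\<Sum>p<n. u p i * cnj (u p j)) = (if i = j then 1 else 0)" using UV ij by simp
  qed
qed

lemma decomp:
  assumes Mc: "M \<in> carrier_mat n n"
    and comp: "\<forall>i<n. \<forall>j<n. (\<Sum>p<n. u p i * cnj (u p j)) = (if i = j then 1 else 0)"
    and eig: "\<forall>p<n. \<forall>i<n. mv n M (u p) i = c p * u p i"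
    and ij: "i < n" "j < n"
  shows "M $$ (i, j) = (\<Sum>p<n. c p * u p i * cnj (u p j))"
proof -
  have "M $$ (i, j) = (\<Sum>l<n. M $$ (i, l) * (if l = j then 1 else 0))"
    using ij by (simp add: if_distrib[where f="\<lambda>t. _ * t"] cong: if_cong)
  also have "\<dots> = (\<Sum>l<n. M $$ (i, l) * (\<Sum>p<n. u p l * cnj (u p j)))"
    using comp ij by (intro sum.cong) auto
  also have "\<dots> = (\<Sum>l<n. \<Sum>p<n. M $$ (i, l) * u p l * cnj (u p j))"
    by (simp add: sum_distrib_left mult.assoc)
  also have "\<dots> = (\<Sum>p<n. \<Sum>l<n. M $$ (i, l) * u p l * cnj (u p j))"
    by (rule sum.swap)
  also have "\<dots> = (\<Sum>p<n. mv n M (u p) i * cnj (u p j))"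
    by (simp add: mv_def sum_distrib_right)
  also have "\<dots> = (\<Sum>p<n. c p * u p i * cnj (u p j))"
    using eig ij by (intro sum.cong) auto
  finally show ?thesis .
qed

lemma funpow_eig:
  assumes "\<forall>i<n. mv n A x i = c * x i"
  shows "i < n \<Longrightarrow> (mv n A ^^ m) x i = c ^ m * x i"
proof (induction m arbitrary: i)
  case 0 then show ?case by simp
next
  case (Suc m)
  have "(mv n A ^^ Suc m) x i = mv n A ((mv n A ^^ m) x) i" by simp
  also have "\<dots> = mv n A (\<lambda>j. c ^ m * x j) i" using Suc.IH by (intro mv_cong) auto
  also have "\<dots> = c ^ m * mv n A x i" by (simp add: mv_def sum_distrib_left algebra_simps)
  finally show ?case using assms Suc.prems by simp
qed

lemma quad_ip: "(\<Sum>i<n. \<Sum>j<n. cnj (v i) * A $$ (i, j) * v j) = ip n v (mv n A v)"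
  by (simp add: ip_def mv_def sum_distrib_left mult.assoc)

lemma spectral:
  assumes hA: "herm n A"
  shows "\<exists>u lam. (\<forall>p<n. \<forall>q<n. ip n (u p) (u q) = (if p = q then 1 else 0)) \<and>
      (\<forall>p<n. \<forall>i<n. mv n A (u p) i = of_real (lam p) * u p i) \<and>
      (\<forall>i<n. \<forall>j<n. (\<Sum>p<n. u p i * cnj (u p j)) = (if i = j then 1 else 0)) \<and>
      (\<forall>i<n. \<forall>j<n. A $$ (i, j) = (\<Sum>p<n. of_real (lam p) * u p i * cnj (u p j)))"
proof -
  obtain u lam where orth: "\<forall>p<n. \<forall>q<n. ip n (u p) (u q) = (if p = q then 1 else 0)"
    and eig: "\<forall>p<n. \<forall>i<n. mv n A (u p) i = of_real (lam p) * u p i"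
    using spectral_k[OF hA order_refl] by blast
  have Ac: "A \<in> carrier_mat n n" using hA herm_def by auto
  note comp = completeness[OF orth]
  show ?thesis using orth eig comp decomp[OF Ac comp eig] by blast
qed

lemma quad_decomp:
  assumes "\<forall>i<n. \<forall>j<n. A $$ (i, j) = (\<Sum>p<n. of_real (lam p) * u p i * cnj (u p j))"
  shows "(\<Sum>i<n. \<Sum>j<n. cnj (v i) * A $$ (i, j) * v j) = of_real (\<Sum>p<n. lam p * (cmod (ip n (u p) v))^2)"
proof -
  have "(\<Sum>i<n. \<Sum>j<n. cnj (v i) * A $$ (i, j) * v j)
      = (\<Sum>i<n. \<Sum>j<n. \<Sum>p<n. of_real (lam p) * (cnj (v i) * u p i) * (cnj (u p j) * v j))"
    using assms by (intro sum.cong refl) (simp add: sum_distrib_left sum_distrib_right algebra_simps)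
  also have "\<dots> = (\<Sum>p<n. of_real (lam p) * ((\<Sum>i<n. cnj (v i) * u p i) * (\<Sum>j<n. cnj (u p j) * v j)))"
  proof -
    have "(\<Sum>i<n. \<Sum>j<n. \<Sum>p<n. of_real (lam p) * (cnj (v i) * u p i) * (cnj (u p j) * v j))
      = (\<Sum>i<n. \<Sum>p<n. \<Sum>j<n. of_real (lam p) * (cnj (v i) * u p i) * (cnj (u p j) * v j))"
      by (rule sum.cong[OF refl], rule sum.swap)
    also have "\<dots> = (\<Sum>p<n. \<Sum>i<n. \<Sum>j<n. of_real (lam p) * (cnj (v i) * u p i) * (cnj (u p j) * v j))"
      by (rule sum.swap)
    also have "\<dots> = (\<Sum>p<n. of_real (lam p) * ((\<Sum>i<n. cnj (v i) * u p i) * (\<Sum>j<n. cnj (u p j) * v j)))"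
      by (rule sum.cong[OF refl]) (simp only: sum_product, simp only: sum_distrib_left mult.assoc)
    finally show ?thesis .
  qed
  also have "\<dots> = (\<Sum>p<n. of_real (lam p) * (cnj (ip n (u p) v) * ip n (u p) v))"
    unfolding ip_def by (simp add: mult.commute)
  also have "\<dots> = of_real (\<Sum>p<n. lam p * (cmod (ip n (u p) v))^2)"
    by (simp add: cnj_mult_self of_real_sum)
  finally show ?thesis .
qed

lemma psd_iff_eig:
  assumes orth: "\<forall>p<n. \<forall>q<n. ip n (u p) (u q) = (if p = q then 1 else 0)"
    and dec: "\<forall>i<n. \<forall>j<n. A $$ (i, j) = (\<Sum>p<n. of_real (lam p) * u p i * cnj (u p j))"
    and Ac: "A \<in> carrier_mat n n"
  shows "psd n A \<longleftrightarrow> (\<forall>p<n. lam p \<ge> 0)"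
proof
  assume psd: "psd n A"
  show "\<forall>p<n. lam p \<ge> 0"
  proof (intro allI impI)
    fix q assume q: "q < n"
    have "(\<Sum>p<n. lam p * (cmod (ip n (u p) (u q)))^2) = (\<Sum>p<n. if p = q then lam p else 0)"
    proof (rule sum.cong[OF refl])
      fix p assume "p \<in> {..<n}"
      then have "ip n (u p) (u q) = (if p = q then 1 else 0)" using orth q by simp
      then show "lam p * (cmod (ip n (u p) (u q)))^2 = (if p = q then lam p else 0)" by simp
    qed
    also have "\<dots> = lam q" using q by simp
    finally have "(\<Sum>i<n. \<Sum>j<n. cnj (u q i) * A $$ (i, j) * u q j) = of_real (lam q)"
      using quad_decomp[OF dec, of "u q"] by simp
    moreover have "Re (\<Sum>i<n. \<Sum>j<n. cnj (u q i) * A $$ (i, j) * u q j) \<ge> 0"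
      using psd[unfolded psd_def, THEN conjunct2, rule_format, of "u q"] by (rule conjunct2)
    ultimately show "lam q \<ge> 0" by simp
  qed
next
  assume nn: "\<forall>p<n. lam p \<ge> 0"
  show "psd n A" unfolding psd_def
  proof (intro conjI allI)
    show "A \<in> carrier_mat n n" by (rule Ac)
    fix v
    have "(\<Sum>p<n. lam p * (cmod (ip n (u p) v))^2) \<ge> 0"
      using nn by (intro sum_nonneg) simp
    then show "Im (\<Sum>i<n. \<Sum>j<n. cnj (v i) * A $$ (i, j) * v j) = 0"
      and "Re (\<Sum>i<n. \<Sum>j<n. cnj (v i) * A $$ (i, j) * v j) \<ge> 0"
      by (simp_all only: quad_decomp[OF dec] Re_complex_of_real Im_complex_of_real)
  qed
qed

lemma trace_pow:
  assumes hA: "herm n A"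
    and orth: "\<forall>p<n. \<forall>q<n. ip n (u p) (u q) = (if p = q then 1 else 0)"
    and eig: "\<forall>p<n. \<forall>i<n. mv n A (u p) i = of_real (lam p) * u p i"
    and comp: "\<forall>i<n. \<forall>j<n. (\<Sum>p<n. u p i * cnj (u p j)) = (if i = j then 1 else 0)"
  shows "Re (mtrace (A ^\<^sub>m m)) = psum (map lam [0..<n]) m"
proof -
  have Ac: "A \<in> carrier_mat n n" using hA herm_def by auto
  have Amc: "A ^\<^sub>m m \<in> carrier_mat n n" using Ac by (intro carrier_matI) auto
  have eigm: "\<forall>p<n. \<forall>i<n. mv n (A ^\<^sub>m m) (u p) i = of_real (lam p) ^ m * u p i"
    using mv_pow[OF Ac] funpow_eig eig by simp
  have "mtrace (A ^\<^sub>m m) = (\<Sum>i<n. (A ^\<^sub>m m) $$ (i, i))" unfolding mtrace_def using Ac by simp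
  also have "\<dots> = (\<Sum>i<n. \<Sum>p<n. of_real (lam p) ^ m * u p i * cnj (u p i))"
    using decomp[OF Amc comp eigm] by simp
  also have "\<dots> = (\<Sum>p<n. of_real (lam p) ^ m * ip n (u p) (u p))"
    by (subst sum.swap) (simp add: ip_def sum_distrib_left algebra_simps)
  also have "\<dots> = (\<Sum>p<n. of_real (lam p ^ m))" using orth by simp
  finally have "Re (mtrace (A ^\<^sub>m m)) = (\<Sum>p<n. lam p ^ m)" by (simp flip: of_real_sum)
  also have "\<dots> = psum (map lam [0..<n]) m"
    unfolding psum_def by (simp add: sum_list_distinct_conv_sum_set atLeast0LessThan)
  finally show ?thesis .
qed

theorem herm_S_iff:
  assumes hA: "herm n A"
  shows "(\<forall>m\<in>{1..n}. S m A \<ge> 0) \<longleftrightarrow> psd n A"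
proof -
  obtain u lam where orth: "\<forall>p<n. \<forall>q<n. ip n (u p) (u q) = (if p = q then 1 else 0)"
    and eig: "\<forall>p<n. \<forall>i<n. mv n A (u p) i = of_real (lam p) * u p i"
    and comp: "\<forall>i<n. \<forall>j<n. (\<Sum>p<n. u p i * cnj (u p j)) = (if i = j then 1 else 0)"
    and dec: "\<forall>i<n. \<forall>j<n. A $$ (i, j) = (\<Sum>p<n. of_real (lam p) * u p i * cnj (u p j))"
    using spectral[OF hA] by blast
  have Ac: "A \<in> carrier_mat n n" using hA herm_def by auto
  define xs where "xs = map lam [0..<n]"
  have Sx: "S m A = esym xs m" for m
    using S_esym trace_pow[OF hA orth eig comp] unfolding xs_def by blast
  have "psd n A \<longleftrightarrow> (\<forall>x\<in>set xs. x \<ge> 0)"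
    using psd_iff_eig[OF orth dec Ac] unfolding xs_def by auto
  moreover have "(\<forall>m\<in>{1..n}. S m A \<ge> 0) \<longleftrightarrow> (\<forall>x\<in>set xs. x \<ge> 0)"
    using esym_pos_imp[of xs] esym_nonneg[of xs] unfolding Sx by (auto simp: xs_def)
  ultimately show ?thesis by simp
qed


definition quad :: "nat \<Rightarrow> complex mat \<Rightarrow> (nat \<Rightarrow> complex) \<Rightarrow> complex" where
  "quad n A v = (\<Sum>i<n. \<Sum>j<n. cnj (v i) * A $$ (i, j) * v j)"

lemma psd_quad: "psd n A \<longleftrightarrow> A \<in> carrier_mat n n \<and> (\<forall>v. Im (quad n A v) = 0 \<and> Re (quad n A v) \<ge> 0)"
  unfolding psd_def quad_def by simp

lemma sum_add_split: "(\<Sum>r<m+(d::nat). f r) = (\<Sum>r<m. f r) + (\<Sum>a<d. f (m + a))"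
  by (induction d) (simp_all add: add.assoc)

lemma sum_split: "(\<Sum>r<k*(d::nat). f r) = (\<Sum>p<k. \<Sum>a<d. f (p*d + a))"
proof (induction k)
  case 0 then show ?case by simp
next
  case (Suc k)
  have "(\<Sum>r<Suc k * d. f r) = (\<Sum>r<k*d + d. f r)" by (simp add: add.commute)
  also have "\<dots> = (\<Sum>r<k*d. f r) + (\<Sum>a<d. f (k*d + a))" by (rule sum_add_split)
  finally show ?case using Suc by simp
qed

lemma sum_block:
  fixes F :: "nat \<Rightarrow> 'a::comm_monoid_add"
  assumes "P < k"
  shows "(\<Sum>x<k*d. if x div d = P then F x else 0) = (\<Sum>i<d. F (P*d + i))"
proof -
  have "(\<Sum>x<k*d. if x div d = P then F x else 0) = (\<Sum>p<k. \<Sum>a<d. if (p*d + a) div d = P then F (p*d + a) else 0)"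
    by (rule sum_split)
  also have "\<dots> = (\<Sum>p<k. if p = P then (\<Sum>a<d. F (p*d + a)) else 0)"
  proof (rule sum.cong[OF refl])
    fix p assume "p \<in> {..<k}"
    have "(\<Sum>a<d. if (p*d + a) div d = P then F (p*d + a) else 0) = (\<Sum>a<d. if p = P then F (p*d + a) else 0)"
    proof (rule sum.cong[OF refl])
      fix a assume "a \<in> {..<d}"
      then have "(p*d + a) div d = p" by auto
      then show "(if (p*d + a) div d = P then F (p*d + a) else 0) = (if p = P then F (p*d + a) else 0)" by simp
    qed
    then show "(\<Sum>a<d. if (p*d + a) div d = P then F (p*d + a) else 0) = (if p = P then (\<Sum>a<d. F (p*d + a)) else 0)"
      by simp
  qed
  also have "\<dots> = (\<Sum>i<d. F (P*d + i))" using assms by (simp add: sum.delta')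
  finally show ?thesis .
qed

lemma swap3:
  "(\<Sum>a\<in>A. \<Sum>t\<in>T. \<Sum>x\<in>X. \<Sum>y\<in>Y. f a t x y) = (\<Sum>t\<in>T. \<Sum>x\<in>X. \<Sum>y\<in>Y. \<Sum>a\<in>A. f a t x y)"
proof -
  have "(\<Sum>a\<in>A. \<Sum>t\<in>T. \<Sum>x\<in>X. \<Sum>y\<in>Y. f a t x y) = (\<Sum>t\<in>T. \<Sum>a\<in>A. \<Sum>x\<in>X. \<Sum>y\<in>Y. f a t x y)"
    by (rule sum.swap)
  also have "\<dots> = (\<Sum>t\<in>T. \<Sum>x\<in>X. \<Sum>a\<in>A. \<Sum>y\<in>Y. f a t x y)"
    by (rule sum.cong[OF refl], rule sum.swap)
  also have "\<dots> = (\<Sum>t\<in>T. \<Sum>x\<in>X. \<Sum>y\<in>Y. \<Sum>a\<in>A. f a t x y)"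
    by (rule sum.cong[OF refl], rule sum.cong[OF refl], rule sum.swap)
  finally show ?thesis .
qed

lemma quad_congr_sum:
  assumes "\<forall>r<N. \<forall>c<N. M $$ (r, c) = (\<Sum>t<T. \<Sum>x<m. \<Sum>y<m. cnj (G t x r) * Y $$ (x, y) * G t y c)"
  shows "quad N M v = (\<Sum>t<T. quad m Y (\<lambda>x. \<Sum>r<N. G t x r * v r))"
proof -
  have "quad N M v = (\<Sum>r<N. \<Sum>c<N. \<Sum>t<T. \<Sum>x<m. \<Sum>y<m. cnj (v r) * cnj (G t x r) * Y $$ (x, y) * G t y c * v c)"
    unfolding quad_def using assms
    by (intro sum.cong refl) (simp add: sum_distrib_left sum_distrib_right mult.assoc)
  also have "\<dots> = (\<Sum>r<N. \<Sum>t<T. \<Sum>x<m. \<Sum>y<m. \<Sum>c<N. cnj (v r) * cnj (G t x r) * Y $$ (x, y) * G t y c * v c)"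
    by (rule sum.cong[OF refl], rule swap3)
  also have "\<dots> = (\<Sum>t<T. \<Sum>x<m. \<Sum>y<m. \<Sum>r<N. \<Sum>c<N. cnj (v r) * cnj (G t x r) * Y $$ (x, y) * G t y c * v c)"
    by (rule swap3)
  also have "\<dots> = (\<Sum>t<T. quad m Y (\<lambda>x. \<Sum>r<N. G t x r * v r))"
    unfolding quad_def
    by (intro sum.cong refl) (simp add: sum_distrib_left sum_distrib_right mult.assoc mult.left_commute, rule sum.swap)
  finally show ?thesis .
qed

lemma psd_sum_quads:
  assumes "psd m Y" "M \<in> carrier_mat N N"
    and "\<forall>r<N. \<forall>c<N. M $$ (r, c) = (\<Sum>t<T. \<Sum>x<m. \<Sum>y<m. cnj (G t x r) * Y $$ (x, y) * G t y c)"
  shows "psd N M"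
  unfolding psd_quad
proof (intro conjI allI)
  fix v
  have e: "quad N M v = (\<Sum>t<T. quad m Y (\<lambda>x. \<Sum>r<N. G t x r * v r))" by (rule quad_congr_sum[OF assms(3)])
  have q: "Im (quad m Y z) = 0 \<and> Re (quad m Y z) \<ge> 0" for z using assms(1) unfolding psd_quad by blast
  show "Im (quad N M v) = 0" unfolding e Im_sum using q by simp
  show "Re (quad N M v) \<ge> 0" unfolding e Re_sum using q by (simp add: sum_nonneg)
qed (use assms in auto)

lemma quad_lin:
  assumes "A \<in> carrier_mat n n" "B \<in> carrier_mat n n"
  shows "quad n (a \<cdot>\<^sub>m A + b \<cdot>\<^sub>m B) v = a * quad n A v + b * quad n B v"
proof -
  have "quad n (a \<cdot>\<^sub>m A + b \<cdot>\<^sub>m B) v = (\<Sum>i<n. \<Sum>j<n. a * (cnj (v i) * A $$ (i, j) * v j) + b * (cnj (v i) * B $$ (i, j) * v j))"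
    unfolding quad_def using assms by (intro sum.cong refl) (simp add: algebra_simps)
  also have "\<dots> = a * quad n A v + b * quad n B v"
    unfolding quad_def by (simp only: sum.distrib sum_distrib_left)
  finally show ?thesis .
qed

lemma psd_comb:
  assumes "psd n A" "psd n B" "a \<ge> 0" "b \<ge> 0"
  shows "psd n (complex_of_real a \<cdot>\<^sub>m A + complex_of_real b \<cdot>\<^sub>m B)"
proof -
  have Ac: "A \<in> carrier_mat n n" and Bc: "B \<in> carrier_mat n n" using assms unfolding psd_quad by auto
  show ?thesis unfolding psd_quad
  proof (intro conjI allI)
    fix v
    have qa: "Im (quad n A v) = 0" "Re (quad n A v) \<ge> 0" and qb: "Im (quad n B v) = 0" "Re (quad n B v) \<ge> 0"
      using assms unfolding psd_quad by auto
    show "Im (quad n (complex_of_real a \<cdot>\<^sub>m A + complex_of_real b \<cdot>\<^sub>m B) v) = 0"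
      using qa qb by (simp add: quad_lin[OF Ac Bc])
    show "Re (quad n (complex_of_real a \<cdot>\<^sub>m A + complex_of_real b \<cdot>\<^sub>m B) v) \<ge> 0"
      using qa qb assms(3,4) by (simp add: quad_lin[OF Ac Bc])
  qed (use Ac Bc in auto)
qed

lemma quad_sparse:
  assumes "SS \<subseteq> {..<n}" "\<forall>a. a \<notin> SS \<longrightarrow> v a = 0"
  shows "quad n A v = (\<Sum>a\<in>SS. \<Sum>b\<in>SS. cnj (v a) * A $$ (a, b) * v b)"
proof -
  have fS: "finite SS" using assms(1) finite_subset by blast
  have "quad n A v = (\<Sum>a\<in>SS. \<Sum>b<n. cnj (v a) * A $$ (a, b) * v b)"
    unfolding quad_def using assms by (intro sum.mono_neutral_right) auto
  also have "\<dots> = (\<Sum>a\<in>SS. \<Sum>b\<in>SS. cnj (v a) * A $$ (a, b) * v b)"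
    using assms by (intro sum.cong refl sum.mono_neutral_right) auto
  finally show ?thesis .
qed

lemma psd_herm:
  assumes "psd n A"
  shows "herm n A"
proof -
  have Ac: "A \<in> carrier_mat n n" using assms unfolding psd_quad by auto
  have im0: "Im (quad n A v) = 0" for v using assms unfolding psd_quad by auto
  have diag: "Im (A $$ (i, i)) = 0" if "i < n" for i
  proof -
    have "quad n A (\<lambda>a. if a = i then 1 else 0) = A $$ (i, i)"
      using that by (subst quad_sparse[where SS="{i}"]) auto
    then show ?thesis using im0 by metis
  qed
  have "A $$ (i, j) = cnj (A $$ (j, i))" if ij: "i < n" "j < n" for i j
  proof (cases "i = j")
    case True then show ?thesis using diag ij by (simp add: complex_eq_iff)
  next
    case False
    have "quad n A (\<lambda>a. if a = i then 1 else if a = j then 1 else 0) = A $$ (i, i) + A $$ (i, j) + A $$ (j, i) + A $$ (j, j)"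
      using ij False by (subst quad_sparse[where SS="{i, j}"]) auto
    then have "Im (A $$ (i, i) + A $$ (i, j) + A $$ (j, i) + A $$ (j, j)) = 0" using im0 by metis
    then have 1: "Im (A $$ (i, j) + A $$ (j, i)) = 0" using diag ij by simp
    have "quad n A (\<lambda>a. if a = i then 1 else if a = j then \<i> else 0) = A $$ (i, i) + \<i> * A $$ (i, j) - \<i> * A $$ (j, i) + A $$ (j, j)"
      using ij False by (subst quad_sparse[where SS="{i, j}"]) (auto simp: algebra_simps)
    then have "Im (A $$ (i, i) + \<i> * A $$ (i, j) - \<i> * A $$ (j, i) + A $$ (j, j)) = 0" using im0 by metis
    then have 2: "Re (A $$ (i, j)) - Re (A $$ (j, i)) = 0" using diag ij by simp
    show ?thesis using 1 2 by (simp add: complex_eq_iff)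
  qed
  then show ?thesis unfolding herm_def using Ac by blast
qed

lemma herm_comb:
  assumes "herm n A" "herm n B"
  shows "herm n (complex_of_real a \<cdot>\<^sub>m A + complex_of_real b \<cdot>\<^sub>m B)"
proof -
  have Ac: "A \<in> carrier_mat n n" and Bc: "B \<in> carrier_mat n n" using assms herm_def by auto
  have "(complex_of_real a \<cdot>\<^sub>m A + complex_of_real b \<cdot>\<^sub>m B) $$ (i, j)
      = cnj ((complex_of_real a \<cdot>\<^sub>m A + complex_of_real b \<cdot>\<^sub>m B) $$ (j, i))" if "i < n" "j < n" for i j
  proof -
    have "A $$ (i, j) = cnj (A $$ (j, i))" "B $$ (i, j) = cnj (B $$ (j, i))"
      using assms that unfolding herm_def by blast+
    then show ?thesis using that Ac Bc by simp
  qed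
  moreover have "complex_of_real a \<cdot>\<^sub>m A + complex_of_real b \<cdot>\<^sub>m B \<in> carrier_mat n n" using Ac Bc by simp
  ultimately show ?thesis unfolding herm_def by blast
qed


lemma idx_div: "a < (d2::nat) \<Longrightarrow> (i * d2 + a) div d2 = i"
  by auto
lemma idx_mod: "a < (d2::nat) \<Longrightarrow> (i * d2 + a) mod d2 = a"
  by auto
lemma idx_lt: "i < (d1::nat) \<Longrightarrow> a < d2 \<Longrightarrow> i * d2 + a < d1 * d2"
proof -
  assume "i < d1" "a < d2"
  then have "i * d2 + a < i * d2 + d2" by simp
  also have "\<dots> = Suc i * d2" by simp
  also have "\<dots> \<le> d1 * d2" using \<open>i < d1\<close> by (intro mult_le_mono1) simp
  finally show ?thesis .
qed
lemma div_lt: "r < (d1::nat) * d2 \<Longrightarrow> r div d2 < d1"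
  by (simp add: less_mult_imp_div_less)
lemma mod_lt: "r < (d1::nat) * d2 \<Longrightarrow> r mod d2 < d2"
  by (metis mod_less_divisor mult_0_right not_gr0 not_less0)
lemma idx_recomb: "(r div (d2::nat)) * d2 + r mod d2 = r"
  by simp

lemma channelD:
  assumes "channel d1 d2 \<Lambda>"
  shows "\<And>A. A \<in> carrier_mat d1 d1 \<Longrightarrow> \<Lambda> A \<in> carrier_mat d2 d2"
    and "\<And>A. A \<in> carrier_mat d1 d1 \<Longrightarrow> mtrace (\<Lambda> A) = mtrace A"
    and "\<And>k X. psd (k * d1) X \<Longrightarrow> psd (k * d2) (ampl k d1 d2 \<Lambda> X)"
  using assms unfolding channel_def by auto

lemma choi_carrier: "choi d1 d2 \<Lambda> \<in> carrier_mat (d1 * d2) (d1 * d2)"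
  unfolding choi_def by simp

lemma choi_entry: "i < d1 \<Longrightarrow> j < d1 \<Longrightarrow> a < d2 \<Longrightarrow> b < d2 \<Longrightarrow>
   choi d1 d2 \<Lambda> $$ (i * d2 + a, j * d2 + b) = \<Lambda> (unit_mat d1 i j) $$ (a, b)"
  unfolding choi_def by (simp add: idx_lt idx_div idx_mod)

lemma mtrace_unit: "i < d1 \<Longrightarrow> j < d1 \<Longrightarrow> mtrace (unit_mat d1 i j) = (if i = j then 1 else 0)"
  unfolding mtrace_def unit_mat_def by (simp add: sum.delta' cong: if_cong)

lemma choi_ptrace:
  assumes ch: "channel d1 d2 \<Lambda>" and ij: "i < d1" "j < d1"
  shows "(\<Sum>a<d2. choi d1 d2 \<Lambda> $$ (i * d2 + a, j * d2 + a)) = (if i = j then 1 else 0)"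
proof -
  have uc: "unit_mat d1 i j \<in> carrier_mat d1 d1" unfolding unit_mat_def by simp
  have "(\<Sum>a<d2. choi d1 d2 \<Lambda> $$ (i * d2 + a, j * d2 + a)) = (\<Sum>a<d2. \<Lambda> (unit_mat d1 i j) $$ (a, a))"
    using ij by (intro sum.cong refl) (simp add: choi_entry)
  also have "\<dots> = mtrace (\<Lambda> (unit_mat d1 i j))"
    unfolding mtrace_def using channelD(1)[OF ch uc] by simp
  also have "\<dots> = mtrace (unit_mat d1 i j)" using channelD(2)[OF ch uc] .
  finally show ?thesis using mtrace_unit ij by simp
qed

definition omega :: "nat \<Rightarrow> complex mat" where
  "omega d = mat (d * d) (d * d) (\<lambda>(r, c). (if r mod d = r div d then 1 else 0) * (if c mod d = c div d then 1 else 0))"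

lemma omega_psd: "psd (d * d) (omega d)"
  unfolding psd_quad
proof (intro conjI allI)
  fix v
  define g where "g r = (if r mod d = r div d then 1 else 0 :: complex)" for r
  define w where "w = (\<Sum>c<d*d. g c * v c)"
  have "quad (d * d) (omega d) v = (\<Sum>r<d*d. \<Sum>c<d*d. (cnj (v r) * g r) * (g c * v c))"
    unfolding quad_def omega_def g_def by (intro sum.cong refl) simp
  also have "\<dots> = (\<Sum>r<d*d. cnj (v r) * g r) * w"
    unfolding w_def by (simp add: sum_product)
  also have "(\<Sum>r<d*d. cnj (v r) * g r) = cnj w"
    unfolding w_def g_def by (simp add: mult.commute if_distrib[where f=cnj] cong: if_cong)
  finally have "quad (d * d) (omega d) v = cnj w * w" .
  then have q: "quad (d * d) (omega d) v = of_real ((cmod w)^2)" by (simp add: cnj_mult_self)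
  show "Im (quad (d * d) (omega d) v) = 0" using q by simp
  show "Re (quad (d * d) (omega d) v) \<ge> 0" using q by simp
qed (simp add: omega_def)

lemma ampl_omega: "ampl d1 d1 d2 \<Lambda> (omega d1) = choi d1 d2 \<Lambda>"
proof (rule eq_matI)
  fix r c assume "r < dim_row (choi d1 d2 \<Lambda>)" "c < dim_col (choi d1 d2 \<Lambda>)"
  then have rc: "r < d1 * d2" "c < d1 * d2" unfolding choi_def by auto
  have "mat d1 d1 (\<lambda>(a, b). omega d1 $$ ((r div d2) * d1 + a, (c div d2) * d1 + b)) = unit_mat d1 (r div d2) (c div d2)"
  proof (rule eq_matI)
    fix a b assume "a < dim_row (unit_mat d1 (r div d2) (c div d2))" "b < dim_col (unit_mat d1 (r div d2) (c div d2))"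
    then have ab: "a < d1" "b < d1" unfolding unit_mat_def by auto
    have l: "(r div d2) * d1 + a < d1 * d1" "(c div d2) * d1 + b < d1 * d1"
      using idx_lt[OF div_lt[OF rc(1)] ab(1)] idx_lt[OF div_lt[OF rc(2)] ab(2)] by auto
    show "mat d1 d1 (\<lambda>(a, b). omega d1 $$ ((r div d2) * d1 + a, (c div d2) * d1 + b)) $$ (a, b) = unit_mat d1 (r div d2) (c div d2) $$ (a, b)"
      using ab l unfolding omega_def unit_mat_def by (auto simp: idx_div idx_mod)
  qed (auto simp: unit_mat_def)
  then show "ampl d1 d1 d2 \<Lambda> (omega d1) $$ (r, c) = choi d1 d2 \<Lambda> $$ (r, c)"
    unfolding ampl_def choi_def using rc by simp
qed (auto simp: ampl_def choi_def)

lemma choi_psd: "channel d1 d2 \<Lambda> \<Longrightarrow> psd (d1 * d2) (choi d1 d2 \<Lambda>)"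
  using channelD(3)[of d1 d2 \<Lambda> d1 "omega d1"] omega_psd[of d1] ampl_omega by simp


lemma sum_if_eq: "(P::nat) < n \<Longrightarrow> (\<Sum>i<n. if i = P then g i else 0) = g P"
  by (subst sum.delta) auto

lemma sum_if_eq': "(P::nat) < n \<Longrightarrow> (\<Sum>j<n. (g j :: complex) * (if P = j then 1 else 0)) = g P"
proof -
  assume P: "P < n"
  have "(\<Sum>j<n. g j * (if P = j then 1 else 0)) = (\<Sum>j<n. if j = P then g j else 0)"
    by (intro sum.cong refl) auto
  also have "\<dots> = g P" using sum_if_eq[OF P] .
  finally show ?thesis .
qed

definition Theta :: "nat \<Rightarrow> nat \<Rightarrow> complex mat \<Rightarrow> complex mat \<Rightarrow> complex mat" where
  "Theta d1 d2 X A = mat d2 d2 (\<lambda>(a, b). \<Sum>i<d1. \<Sum>j<d1. A $$ (i, j) * X $$ (i * d2 + a, j * d2 + b))"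

lemma choi_Theta:
  assumes "X \<in> carrier_mat (d1 * d2) (d1 * d2)"
  shows "choi d1 d2 (Theta d1 d2 X) = X"
proof (rule eq_matI)
  fix r c assume "r < dim_row X" "c < dim_col X"
  then have rc: "r < d1 * d2" "c < d1 * d2" using assms by auto
  let ?P = "r div d2" and ?Q = "c div d2" and ?a = "r mod d2" and ?b = "c mod d2"
  have PQ: "?P < d1" "?Q < d1" "?a < d2" "?b < d2" using rc div_lt mod_lt by auto
  have "choi d1 d2 (Theta d1 d2 X) $$ (r, c) = (\<Sum>i<d1. \<Sum>j<d1. unit_mat d1 ?P ?Q $$ (i, j) * X $$ (i * d2 + ?a, j * d2 + ?b))"
    unfolding choi_def Theta_def using rc PQ by simp
  also have "\<dots> = (\<Sum>i<d1. if i = ?P then (\<Sum>j<d1. if j = ?Q then X $$ (i * d2 + ?a, j * d2 + ?b) else 0) else 0)"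
  proof (rule sum.cong[OF refl])
    fix i assume i: "i \<in> {..<d1}"
    have "(\<Sum>j<d1. unit_mat d1 ?P ?Q $$ (i, j) * X $$ (i * d2 + ?a, j * d2 + ?b))
        = (\<Sum>j<d1. if i = ?P then (if j = ?Q then X $$ (i * d2 + ?a, j * d2 + ?b) else 0) else 0)"
      using i unfolding unit_mat_def by (intro sum.cong refl) auto
    also have "\<dots> = (if i = ?P then (\<Sum>j<d1. if j = ?Q then X $$ (i * d2 + ?a, j * d2 + ?b) else 0) else 0)"
      by (cases "i = ?P") simp_all
    finally show "(\<Sum>j<d1. unit_mat d1 ?P ?Q $$ (i, j) * X $$ (i * d2 + ?a, j * d2 + ?b))
        = (if i = ?P then (\<Sum>j<d1. if j = ?Q then X $$ (i * d2 + ?a, j * d2 + ?b) else 0) else 0)" .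
  qed
  also have "\<dots> = (\<Sum>j<d1. if j = ?Q then X $$ (?P * d2 + ?a, j * d2 + ?b) else 0)"
    by (rule sum_if_eq[OF PQ(1)])
  also have "\<dots> = X $$ (?P * d2 + ?a, ?Q * d2 + ?b)"
    by (rule sum_if_eq[OF PQ(2)])
  also have "\<dots> = X $$ (r, c)" by simp
  finally show "choi d1 d2 (Theta d1 d2 X) $$ (r, c) = X $$ (r, c)" .
qed (use assms in \<open>auto simp: choi_def\<close>)

lemma psd_gram:
  assumes "psd n X"
  shows "\<exists>w. \<forall>p<n. \<forall>q<n. X $$ (p, q) = (\<Sum>t<n. w t p * cnj (w t q))"
proof -
  have hX: "herm n X" using psd_herm[OF assms] .
  obtain u lam where orth: "\<forall>p<n. \<forall>q<n. ip n (u p) (u q) = (if p = q then 1 else 0)"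
    and dec: "\<forall>i<n. \<forall>j<n. X $$ (i, j) = (\<Sum>p<n. of_real (lam p) * u p i * cnj (u p j))"
    using spectral[OF hX] by blast
  have Xc: "X \<in> carrier_mat n n" using hX herm_def by auto
  have nn: "\<forall>p<n. lam p \<ge> 0" using psd_iff_eig[OF orth dec Xc] assms by blast
  define w where "w t p = complex_of_real (sqrt (lam t)) * u t p" for t p
  have "X $$ (p, q) = (\<Sum>t<n. w t p * cnj (w t q))" if "p < n" "q < n" for p q
  proof -
    have "X $$ (p, q) = (\<Sum>t<n. of_real (lam t) * u t p * cnj (u t q))" using dec that by blast
    also have "\<dots> = (\<Sum>t<n. w t p * cnj (w t q))"
    proof (rule sum.cong[OF refl])
      fix t assume "t \<in> {..<n}"
      then have l: "lam t \<ge> 0" using nn by simp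
      have "complex_of_real (sqrt (lam t)) * complex_of_real (sqrt (lam t)) = of_real (lam t)"
        using l by (simp flip: of_real_mult)
      then show "of_real (lam t) * u t p * cnj (u t q) = w t p * cnj (w t q)"
        unfolding w_def by (simp add: algebra_simps)
    qed
    finally show ?thesis .
  qed
  then show ?thesis by blast
qed

lemma Theta_channel:
  assumes Xpsd: "psd (d1 * d2) X"
    and ptr: "\<And>i j. i < d1 \<Longrightarrow> j < d1 \<Longrightarrow> (\<Sum>a<d2. X $$ (i * d2 + a, j * d2 + a)) = (if i = j then 1 else 0)"
  shows "channel d1 d2 (Theta d1 d2 X)"
  unfolding channel_def
proof (intro conjI ballI allI impI)
  fix A :: "complex mat" assume "A \<in> carrier_mat d1 d1"
  show "Theta d1 d2 X A \<in> carrier_mat d2 d2" unfolding Theta_def by simp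
next
  fix A B :: "complex mat" assume A: "A \<in> carrier_mat d1 d1" and B: "B \<in> carrier_mat d1 d1"
  show "Theta d1 d2 X (A + B) = Theta d1 d2 X A + Theta d1 d2 X B"
  proof (rule eq_matI)
    fix a b assume "a < dim_row (Theta d1 d2 X A + Theta d1 d2 X B)" "b < dim_col (Theta d1 d2 X A + Theta d1 d2 X B)"
    then have ab: "a < d2" "b < d2" unfolding Theta_def by auto
    have "Theta d1 d2 X (A + B) $$ (a, b) = (\<Sum>i<d1. \<Sum>j<d1. (A + B) $$ (i, j) * X $$ (i * d2 + a, j * d2 + b))"
      unfolding Theta_def using ab by simp
    also have "\<dots> = (\<Sum>i<d1. \<Sum>j<d1. A $$ (i, j) * X $$ (i * d2 + a, j * d2 + b) + B $$ (i, j) * X $$ (i * d2 + a, j * d2 + b))"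
      using A B by (intro sum.cong refl) (simp add: algebra_simps)
    also have "\<dots> = (Theta d1 d2 X A + Theta d1 d2 X B) $$ (a, b)"
      unfolding Theta_def using ab by (simp add: sum.distrib)
    finally show "Theta d1 d2 X (A + B) $$ (a, b) = (Theta d1 d2 X A + Theta d1 d2 X B) $$ (a, b)" .
  qed (auto simp: Theta_def)
next
  fix c :: complex and A :: "complex mat" assume A: "A \<in> carrier_mat d1 d1"
  show "Theta d1 d2 X (c \<cdot>\<^sub>m A) = c \<cdot>\<^sub>m Theta d1 d2 X A"
  proof (rule eq_matI)
    fix a b assume "a < dim_row (c \<cdot>\<^sub>m Theta d1 d2 X A)" "b < dim_col (c \<cdot>\<^sub>m Theta d1 d2 X A)"
    then have ab: "a < d2" "b < d2" unfolding Theta_def by auto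
    show "Theta d1 d2 X (c \<cdot>\<^sub>m A) $$ (a, b) = (c \<cdot>\<^sub>m Theta d1 d2 X A) $$ (a, b)"
      unfolding Theta_def using ab A by (simp add: sum_distrib_left mult.assoc)
  qed (auto simp: Theta_def)
next
  fix A :: "complex mat" assume A: "A \<in> carrier_mat d1 d1"
  have "mtrace (Theta d1 d2 X A) = (\<Sum>a<d2. \<Sum>i<d1. \<Sum>j<d1. A $$ (i, j) * X $$ (i * d2 + a, j * d2 + a))"
    unfolding mtrace_def Theta_def by simp
  also have "\<dots> = (\<Sum>i<d1. \<Sum>j<d1. \<Sum>a<d2. A $$ (i, j) * X $$ (i * d2 + a, j * d2 + a))"
  proof -
    have "(\<Sum>a<d2. \<Sum>i<d1. \<Sum>j<d1. A $$ (i, j) * X $$ (i * d2 + a, j * d2 + a))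
        = (\<Sum>i<d1. \<Sum>a<d2. \<Sum>j<d1. A $$ (i, j) * X $$ (i * d2 + a, j * d2 + a))" by (rule sum.swap)
    also have "\<dots> = (\<Sum>i<d1. \<Sum>j<d1. \<Sum>a<d2. A $$ (i, j) * X $$ (i * d2 + a, j * d2 + a))"
      by (rule sum.cong[OF refl], rule sum.swap)
    finally show ?thesis .
  qed
  also have "\<dots> = (\<Sum>i<d1. \<Sum>j<d1. A $$ (i, j) * (if i = j then 1 else 0))"
    by (intro sum.cong refl) (simp add: sum_distrib_left[symmetric] ptr)
  also have "\<dots> = (\<Sum>i<d1. A $$ (i, i))" by (intro sum.cong refl) (simp add: sum_if_eq')
  also have "\<dots> = mtrace A" unfolding mtrace_def using A by simp
  finally show "mtrace (Theta d1 d2 X A) = mtrace A" .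
next
  fix k Y assume Ypsd: "psd (k * d1) Y"
  obtain w where wX: "\<forall>p<d1*d2. \<forall>q<d1*d2. X $$ (p, q) = (\<Sum>t<d1*d2. w t p * cnj (w t q))"
    using psd_gram[OF Xpsd] by blast
  define G where "G t x r = (if x div d1 = r div d2 then cnj (w t ((x mod d1) * d2 + r mod d2)) else 0)" for t x r
  show "psd (k * d2) (ampl k d1 d2 (Theta d1 d2 X) Y)"
  proof (rule psd_sum_quads[OF Ypsd, where T="d1*d2" and G=G])
    show "ampl k d1 d2 (Theta d1 d2 X) Y \<in> carrier_mat (k * d2) (k * d2)" unfolding ampl_def by simp
    show "\<forall>r<k * d2. \<forall>c<k * d2. ampl k d1 d2 (Theta d1 d2 X) Y $$ (r, c) =
        (\<Sum>t<d1 * d2. \<Sum>x<k * d1. \<Sum>y<k * d1. cnj (G t x r) * Y $$ (x, y) * G t y c)"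
    proof (intro allI impI)
      fix r c assume rc: "r < k * d2" "c < k * d2"
      define P where "P = r div d2"
      define Q where "Q = c div d2"
      define a where "a = r mod d2"
      define b where "b = c mod d2"
      have PQ: "P < k" "Q < k" "a < d2" "b < d2"
        unfolding P_def Q_def a_def b_def using rc div_lt[of r k d2] div_lt[of c k d2] mod_lt[of r k d2] mod_lt[of c k d2] by auto
      have "ampl k d1 d2 (Theta d1 d2 X) Y $$ (r, c) = (\<Sum>i<d1. \<Sum>j<d1. Y $$ (P * d1 + i, Q * d1 + j) * X $$ (i * d2 + a, j * d2 + b))"
        unfolding ampl_def Theta_def P_def Q_def a_def b_def using rc PQ
        by (simp add: a_def b_def)
      also have "\<dots> = (\<Sum>i<d1. \<Sum>j<d1. \<Sum>t<d1*d2. w t (i * d2 + a) * Y $$ (P * d1 + i, Q * d1 + j) * cnj (w t (j * d2 + b)))"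
      proof (intro sum.cong refl)
        fix i j assume ij: "i \<in> {..<d1}" "j \<in> {..<d1}"
        have "X $$ (i * d2 + a, j * d2 + b) = (\<Sum>t<d1*d2. w t (i * d2 + a) * cnj (w t (j * d2 + b)))"
          using wX idx_lt[of i d1 a d2] idx_lt[of j d1 b d2] ij PQ by simp
        then show "Y $$ (P * d1 + i, Q * d1 + j) * X $$ (i * d2 + a, j * d2 + b) =
            (\<Sum>t<d1*d2. w t (i * d2 + a) * Y $$ (P * d1 + i, Q * d1 + j) * cnj (w t (j * d2 + b)))"
          by (simp add: sum_distrib_left algebra_simps)
      qed
      also have "\<dots> = (\<Sum>t<d1*d2. \<Sum>i<d1. \<Sum>j<d1. w t (i * d2 + a) * Y $$ (P * d1 + i, Q * d1 + j) * cnj (w t (j * d2 + b)))"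
      proof -
        have "(\<Sum>i<d1. \<Sum>j<d1. \<Sum>t<d1*d2. w t (i * d2 + a) * Y $$ (P * d1 + i, Q * d1 + j) * cnj (w t (j * d2 + b)))
          = (\<Sum>i<d1. \<Sum>t<d1*d2. \<Sum>j<d1. w t (i * d2 + a) * Y $$ (P * d1 + i, Q * d1 + j) * cnj (w t (j * d2 + b)))"
          by (rule sum.cong[OF refl], rule sum.swap)
        also have "\<dots> = (\<Sum>t<d1*d2. \<Sum>i<d1. \<Sum>j<d1. w t (i * d2 + a) * Y $$ (P * d1 + i, Q * d1 + j) * cnj (w t (j * d2 + b)))"
          by (rule sum.swap)
        finally show ?thesis .
      qed
      also have "\<dots> = (\<Sum>t<d1 * d2. \<Sum>x<k * d1. \<Sum>y<k * d1. cnj (G t x r) * Y $$ (x, y) * G t y c)"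
      proof (rule sum.cong[OF refl])
        fix t assume "t \<in> {..<d1*d2}"
        define F where "F x y = w t ((x mod d1) * d2 + a) * Y $$ (x, y) * cnj (w t ((y mod d1) * d2 + b))" for x y
        have "(\<Sum>x<k * d1. \<Sum>y<k * d1. cnj (G t x r) * Y $$ (x, y) * G t y c)
            = (\<Sum>x<k * d1. if x div d1 = P then (\<Sum>y<k * d1. if y div d1 = Q then F x y else 0) else 0)"
        proof (rule sum.cong[OF refl])
          fix x assume "x \<in> {..<k*d1}"
          have "(\<Sum>y<k * d1. cnj (G t x r) * Y $$ (x, y) * G t y c)
              = (\<Sum>y<k * d1. if x div d1 = P then (if y div d1 = Q then F x y else 0) else 0)"
            unfolding G_def F_def P_def Q_def a_def b_def by (intro sum.cong refl) simp
          also have "\<dots> = (if x div d1 = P then (\<Sum>y<k * d1. if y div d1 = Q then F x y else 0) else 0)"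
            by (cases "x div d1 = P") simp_all
          finally show "(\<Sum>y<k * d1. cnj (G t x r) * Y $$ (x, y) * G t y c)
              = (if x div d1 = P then (\<Sum>y<k * d1. if y div d1 = Q then F x y else 0) else 0)" .
        qed
        also have "\<dots> = (\<Sum>x<k * d1. if x div d1 = P then (\<Sum>j<d1. F x (Q * d1 + j)) else 0)"
          by (intro sum.cong refl) (simp add: sum_block[OF PQ(2)])
        also have "\<dots> = (\<Sum>i<d1. \<Sum>j<d1. F (P * d1 + i) (Q * d1 + j))"
          by (rule sum_block[OF PQ(1)])
        also have "\<dots> = (\<Sum>i<d1. \<Sum>j<d1. w t (i * d2 + a) * Y $$ (P * d1 + i, Q * d1 + j) * cnj (w t (j * d2 + b)))"
          unfolding F_def by (intro sum.cong refl) (simp add: idx_mod)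
        finally show "(\<Sum>i<d1. \<Sum>j<d1. w t (i * d2 + a) * Y $$ (P * d1 + i, Q * d1 + j) * cnj (w t (j * d2 + b)))
            = (\<Sum>x<k * d1. \<Sum>y<k * d1. cnj (G t x r) * Y $$ (x, y) * G t y c)" by simp
      qed
      finally show "ampl k d1 d2 (Theta d1 d2 X) Y $$ (r, c) =
        (\<Sum>t<d1 * d2. \<Sum>x<k * d1. \<Sum>y<k * d1. cnj (G t x r) * Y $$ (x, y) * G t y c)" .
    qed
  qed
qed


lemma coef1:
  fixes L T :: complex and s s' :: real
  assumes "s > 0" "s' > 0"
  shows "complex_of_real ((1+s)/s) * (complex_of_real (1/(1+s')) * (L + complex_of_real s' * T)) - complex_of_real (1/s) * L
     = complex_of_real ((s-s')/(s*(1+s'))) * L + complex_of_real ((1+s)*s'/(s*(1+s'))) * T"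
proof -
  have p: "s * s' > 0" using assms by simp
  have nz3: "s + s * s' \<noteq> 0" using assms p by linarith
  have nz: "s \<noteq> 0" "1 + s' \<noteq> 0" "s + s * s' \<noteq> 0" "s * (1 + s') \<noteq> 0"
    using assms nz3 by (simp_all add: distrib_left)
  have a1: "(1+s)/s * (1/(1+s')) = (1+s)/(s*(1+s'))" by simp
  have a2: "1/s = (1+s')/(s*(1+s'))" using nz by simp
  have a: "(1+s)/s * (1/(1+s')) - 1/s = (s-s')/(s*(1+s'))"
    unfolding a1 a2 diff_divide_distrib[symmetric] by simp
  have b: "(1+s)/s * (1/(1+s')) * s' = (1+s)*s'/(s*(1+s'))" using nz by (simp add: field_simps)
  have "complex_of_real ((1+s)/s) * (complex_of_real (1/(1+s')) * (L + complex_of_real s' * T)) - complex_of_real (1/s) * L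
     = complex_of_real ((1+s)/s * (1/(1+s')) - 1/s) * L + complex_of_real ((1+s)/s * (1/(1+s')) * s') * T"
  proof -
    have r: "(\<alpha>::complex) * (\<beta> * (L + \<sigma> * T)) - \<gamma> * L = (\<alpha>*\<beta> - \<gamma>) * L + (\<alpha>*\<beta>*\<sigma>) * T" for \<alpha> \<beta> \<gamma> \<sigma>
      by (simp add: algebra_simps)
    show ?thesis unfolding r by (simp only: of_real_mult of_real_diff)
  qed
  then show ?thesis by (simp only: a b)
qed

lemma coef2:
  fixes L Z :: complex and s :: real
  assumes "s > 0"
  shows "complex_of_real (1/(1+s)) * (L + complex_of_real s * (complex_of_real ((1+s)/s) * Z - complex_of_real (1/s) * L)) = Z"
proof -
  have p: "s * s > 0" using assms by simp
  have nz3: "s + s * s \<noteq> 0" using assms p by linarith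
  have nz: "s \<noteq> 0" "1 + s \<noteq> 0" "s + s * s \<noteq> 0" using assms nz3 by simp_all
  have a: "1/(1+s) * (s * ((1+s)/s)) = 1" "1/(1+s) - 1/(1+s) * (s * (1/s)) = 0" using nz by (simp_all add: field_simps)
  have "complex_of_real (1/(1+s)) * (L + complex_of_real s * (complex_of_real ((1+s)/s) * Z - complex_of_real (1/s) * L))
      = complex_of_real (1/(1+s) * (s * ((1+s)/s))) * Z + complex_of_real (1/(1+s) - 1/(1+s) * (s * (1/s))) * L"
  proof -
    have r: "(\<beta>::complex) * (L + \<sigma> * (\<alpha> * Z - \<gamma> * L)) = (\<beta> * (\<sigma> * \<alpha>)) * Z + (\<beta> - \<beta> * (\<sigma> * \<gamma>)) * L" for \<alpha> \<beta> \<gamma> \<sigma>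
      by (simp add: algebra_simps)
    show ?thesis unfolding r by (simp only: of_real_mult of_real_diff)
  qed
  then show ?thesis by (simp only: a) simp
qed

theorem lemma14:
  fixes d1 d2 :: nat and \<Lambda> \<Xi> :: "complex mat \<Rightarrow> complex mat" and s :: real
  assumes "d1 > 0" and "d2 > 0"
    and "channel d1 d2 \<Lambda>" and "channel d1 d2 \<Xi>" and "s > 0"
  shows "(\<exists>s' :: real. \<exists>\<Theta>. 0 < s' \<and> s' \<le> s \<and> channel d1 d2 \<Theta> \<and>
            choi d1 d2 \<Xi> = complex_of_real (1 / (1 + s')) \<cdot>\<^sub>m
               (choi d1 d2 \<Lambda> + complex_of_real s' \<cdot>\<^sub>m choi d1 d2 \<Theta>))
     \<longleftrightarrow> (\<forall>m \<in> {1..d1 * d2}.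
            S m (complex_of_real ((1 + s) / s) \<cdot>\<^sub>m choi d1 d2 \<Xi>
                 - complex_of_real (1 / s) \<cdot>\<^sub>m choi d1 d2 \<Lambda>) \<ge> 0)"
proof -
  note chL = assms(3) and chX = assms(4) and s0 = assms(5)
  let ?N = "d1 * d2"
  let ?JX = "choi d1 d2 \<Xi>" and ?JL = "choi d1 d2 \<Lambda>"
  define X where "X = complex_of_real ((1 + s) / s) \<cdot>\<^sub>m ?JX - complex_of_real (1 / s) \<cdot>\<^sub>m ?JL"
  have JXc: "?JX \<in> carrier_mat ?N ?N" and JLc: "?JL \<in> carrier_mat ?N ?N" by (simp_all add: choi_carrier)
  have Xc: "X \<in> carrier_mat ?N ?N" unfolding X_def using JXc JLc by (intro minus_carrier_mat smult_carrier_mat)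
  have Xe: "X $$ (r, c) = complex_of_real ((1 + s) / s) * ?JX $$ (r, c) - complex_of_real (1 / s) * ?JL $$ (r, c)"
    if "r < ?N" "c < ?N" for r c
    unfolding X_def using that JXc JLc by simp
  have X_eq: "X = complex_of_real ((1 + s) / s) \<cdot>\<^sub>m ?JX + complex_of_real (- (1 / s)) \<cdot>\<^sub>m ?JL"
    by (rule eq_matI) (use Xc JXc JLc Xe in auto)
  have hX: "herm ?N X" unfolding X_eq
    by (intro herm_comb psd_herm choi_psd chL chX)
  have Siff: "(\<forall>m\<in>{1..?N}. S m X \<ge> 0) \<longleftrightarrow> psd ?N X" by (rule herm_S_iff[OF hX])
  show ?thesis unfolding X_def[symmetric] Siff
  proof
    assume "\<exists>s' \<Theta>. 0 < s' \<and> s' \<le> s \<and> channel d1 d2 \<Theta> \<and>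
            ?JX = complex_of_real (1 / (1 + s')) \<cdot>\<^sub>m (?JL + complex_of_real s' \<cdot>\<^sub>m choi d1 d2 \<Theta>)"
    then obtain s' \<Theta> where s': "0 < s'" "s' \<le> s" and chT: "channel d1 d2 \<Theta>"
      and eq: "?JX = complex_of_real (1 / (1 + s')) \<cdot>\<^sub>m (?JL + complex_of_real s' \<cdot>\<^sub>m choi d1 d2 \<Theta>)" by blast
    let ?JT = "choi d1 d2 \<Theta>"
    have JTc: "?JT \<in> carrier_mat ?N ?N" by (simp add: choi_carrier)
    have "X = complex_of_real ((s-s')/(s*(1+s'))) \<cdot>\<^sub>m ?JL + complex_of_real ((1+s)*s'/(s*(1+s'))) \<cdot>\<^sub>m ?JT"
    proof (rule eq_matI)
      fix r c assume "r < dim_row (complex_of_real ((s-s')/(s*(1+s'))) \<cdot>\<^sub>m ?JL + complex_of_real ((1+s)*s'/(s*(1+s'))) \<cdot>\<^sub>m ?JT)"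
        "c < dim_col (complex_of_real ((s-s')/(s*(1+s'))) \<cdot>\<^sub>m ?JL + complex_of_real ((1+s)*s'/(s*(1+s'))) \<cdot>\<^sub>m ?JT)"
      then have rc: "r < ?N" "c < ?N" using JLc JTc by auto
      have "?JX $$ (r, c) = complex_of_real (1 / (1 + s')) * (?JL $$ (r, c) + complex_of_real s' * ?JT $$ (r, c))"
        using arg_cong[OF eq, of "\<lambda>M. M $$ (r, c)"] rc JLc JTc by simp
      then show "X $$ (r, c) = (complex_of_real ((s-s')/(s*(1+s'))) \<cdot>\<^sub>m ?JL + complex_of_real ((1+s)*s'/(s*(1+s'))) \<cdot>\<^sub>m ?JT) $$ (r, c)"
        using Xe[OF rc] rc JLc JTc coef1[OF s0 s'(1)] by simp
    qed (use Xc JLc JTc in auto)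
    moreover have "psd ?N (complex_of_real ((s-s')/(s*(1+s'))) \<cdot>\<^sub>m ?JL + complex_of_real ((1+s)*s'/(s*(1+s'))) \<cdot>\<^sub>m ?JT)"
      using s' s0 by (intro psd_comb choi_psd chL chT) simp_all
    ultimately show "psd ?N X" by simp
  next
    assume Xpsd: "psd ?N X"
    have ptr: "(\<Sum>a<d2. X $$ (i * d2 + a, j * d2 + a)) = (if i = j then 1 else 0)" if ij: "i < d1" "j < d1" for i j
    proof -
      have "(\<Sum>a<d2. X $$ (i * d2 + a, j * d2 + a)) = (\<Sum>a<d2. complex_of_real ((1 + s) / s) * ?JX $$ (i * d2 + a, j * d2 + a) - complex_of_real (1 / s) * ?JL $$ (i * d2 + a, j * d2 + a))"
        using ij idx_lt by (intro sum.cong refl Xe) auto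
      also have "\<dots> = complex_of_real ((1 + s) / s) * (if i = j then 1 else 0) - complex_of_real (1 / s) * (if i = j then 1 else 0)"
        by (simp only: sum_subtractf sum_distrib_left[symmetric] choi_ptrace[OF chL ij] choi_ptrace[OF chX ij])
      also have "\<dots> = (if i = j then 1 else 0)"
      proof -
        have "complex_of_real ((1 + s) / s) - complex_of_real (1 / s) = complex_of_real ((1 + s) / s - 1 / s)" by simp
        also have "(1 + s) / s - 1 / s = 1" using s0 by (simp add: field_simps)
        finally show ?thesis by simp
      qed
      finally show ?thesis .
    qed
    have chT: "channel d1 d2 (Theta d1 d2 X)" by (rule Theta_channel[OF Xpsd ptr])
    have cT: "choi d1 d2 (Theta d1 d2 X) = X" by (rule choi_Theta[OF Xc])
    have "?JX = complex_of_real (1 / (1 + s)) \<cdot>\<^sub>m (?JL + complex_of_real s \<cdot>\<^sub>m X)"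
    proof (rule eq_matI)
      fix r c assume "r < dim_row (complex_of_real (1 / (1 + s)) \<cdot>\<^sub>m (?JL + complex_of_real s \<cdot>\<^sub>m X))"
        "c < dim_col (complex_of_real (1 / (1 + s)) \<cdot>\<^sub>m (?JL + complex_of_real s \<cdot>\<^sub>m X))"
      then have rc: "r < ?N" "c < ?N" using JLc Xc by auto
      show "?JX $$ (r, c) = (complex_of_real (1 / (1 + s)) \<cdot>\<^sub>m (?JL + complex_of_real s \<cdot>\<^sub>m X)) $$ (r, c)"
        using rc JLc Xc Xe[OF rc] coef2[OF s0, of "?JL $$ (r, c)" "?JX $$ (r, c)"] by simp
    qed (use Xc JLc JXc in auto)
    then show "\<exists>s' \<Theta>. 0 < s' \<and> s' \<le> s \<and> channel d1 d2 \<Theta> \<and>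
            ?JX = complex_of_real (1 / (1 + s')) \<cdot>\<^sub>m (?JL + complex_of_real s' \<cdot>\<^sub>m choi d1 d2 \<Theta>)"
      using s0 chT cT by (intro exI[of _ s] exI[of _ "Theta d1 d2 X"]) simp
  qed
qed


end
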